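(* For all integers $d,a,b,p,p'\ge0$, writing $M=\max\{p,p'\}$, \[\sum_{\mu\vdash d}\{s_\mu h_a\}_{\lambda_1=p}\otimes\{s_\mu h_b\}_{\lambda_1=p'}=\sum_{\mu\vdash d+a+b-M}\{s_\mu h_{M-b}\}_{\lambda_1=p}\otimes\{s_\mu h_{M-a}\}_{\lambda_1=p'}\] in $\Lambda\otimes\Lambda$.
   Context: $\Lambda$ is the ring of symmetric functions, $s_\lambda$ the Schur functions, $h_k$ the complete homogeneous symmetric functions, with $h_k=0$ for $k<0$ and a sum over partitions of a negative integer being empty. For $G=\sum_\lambda c_\lambda s_\lambda\in\Lambda$, $\{G\}_{\lambda_1=p}:=\sum_{\lambda:\lambda_1=p}c_\lambda s_\lambda$. *)

theory Defs
  imports Main "HOL-Library.Poly_Mapping"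
begin

definition is_partition :: "nat list \<Rightarrow> bool" where
  "is_partition la \<longleftrightarrow> sorted_wrt (\<ge>) la \<and> (\<forall>x\<in>set la. 0 < x)"

definition partitions_of :: "int \<Rightarrow> nat list set" where
  "partitions_of n = {la. is_partition la \<and> int (sum_list la) = n}"

definition first_part :: "nat list \<Rightarrow> nat" where
  "first_part la = (if la = [] then 0 else hd la)"

definition cells :: "nat list \<Rightarrow> (nat \<times> nat) set" where
  "cells la = {(i, j). i < length la \<and> j < la ! i}"

text \<open>A monomial is a finitely supported exponent vector; a (formal) series is a
  coefficient function on monomials. Lambda embeds into such series.\<close>
type_synonym monom = "nat \<Rightarrow>\<^sub>0 nat"
type_synonym series = "monom \<Rightarrow> int"

text \<open>Semistandard Young tableaux of shape lambda (entries = variable indices),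
  with value 0 outside the diagram so that tableaux are unique functions.\<close>
definition ssyt :: "nat list \<Rightarrow> (nat \<times> nat \<Rightarrow> nat) set" where
  "ssyt la = {T. (\<forall>c. c \<notin> cells la \<longrightarrow> T c = 0)
     \<and> (\<forall>i j. (i, Suc j) \<in> cells la \<longrightarrow> T (i, j) \<le> T (i, Suc j))
     \<and> (\<forall>i j. (Suc i, j) \<in> cells la \<longrightarrow> T (i, j) < T (Suc i, j))}"

definition content :: "nat list \<Rightarrow> (nat \<times> nat \<Rightarrow> nat) \<Rightarrow> monom \<Rightarrow> bool" where
  "content la T m \<longleftrightarrow> (\<forall>k. Poly_Mapping.lookup m k = card {c \<in> cells la. T c = k})"

definition schur :: "nat list \<Rightarrow> series" where
  "schur la = (\<lambda>m. int (card {T \<in> ssyt la. content la T m}))"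

definition sf_zero :: series where "sf_zero = (\<lambda>m. 0)"

definition hsf :: "int \<Rightarrow> series" where
  "hsf k = (if k < 0 then sf_zero else if k = 0 then schur [] else schur [nat k])"

definition sf_mult :: "series \<Rightarrow> series \<Rightarrow> series" where
  "sf_mult f g = (\<lambda>m. \<Sum>(m1, m2)\<in>{(m1, m2). m1 + m2 = m}. f m1 * g m2)"

definition schur_expansion :: "series \<Rightarrow> (nat list \<Rightarrow> int) \<Rightarrow> bool" where
  "schur_expansion G c \<longleftrightarrow> finite {la. c la \<noteq> 0} \<and> (\<forall>la. c la \<noteq> 0 \<longrightarrow> is_partition la)
     \<and> G = (\<lambda>m. \<Sum>la\<in>{la. c la \<noteq> 0}. c la * schur la m)"

definition first_row_part :: "nat \<Rightarrow> series \<Rightarrow> series" where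
  "first_row_part p G = (let c = (THE c. schur_expansion G c) in
     (\<lambda>m. \<Sum>la\<in>{la. c la \<noteq> 0 \<and> first_part la = p}. c la * schur la m))"

text \<open>Lambda (x) Lambda embedded into series in two alphabets x, y.\<close>
type_synonym series2 = "monom \<times> monom \<Rightarrow> int"

definition sf_tensor :: "series \<Rightarrow> series \<Rightarrow> series2" where
  "sf_tensor f g = (\<lambda>(m1, m2). f m1 * g m2)"

end

theory Submission
  imports Defs
begin


definition fs :: "(nat \<Rightarrow> nat) \<Rightarrow> bool" where
  "fs f \<longleftrightarrow> (\<exists>L. \<forall>i\<ge>L. f i = 0)"

definition partF :: "(nat \<Rightarrow> nat) \<Rightarrow> bool" where
  "partF f \<longleftrightarrow> (\<forall>i. f (Suc i) \<le> f i) \<and> fs f"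

definition il :: "(nat \<Rightarrow> nat) \<Rightarrow> (nat \<Rightarrow> nat) \<Rightarrow> bool" where
  "il k m \<longleftrightarrow> (\<forall>i. m (Suc i) \<le> k i \<and> k i \<le> m i)"

definition sz :: "(nat \<Rightarrow> nat) \<Rightarrow> nat" where
  "sz f = sum f {i. 0 < f i}"

lemma sz_eq:
  assumes "\<forall>i\<ge>L. f i = 0"
  shows "sz f = sum f {..<L}"
proof -
  have sub: "{i. 0 < f i} \<subseteq> {..<L}" using assms by (auto simp: not_less[symmetric])
  have "sum f {..<L} = sum f {i. 0 < f i}"
    by (rule sum.mono_neutral_right) (use sub in auto)
  then show ?thesis unfolding sz_def by simp
qed

definition Bx :: "(nat \<Rightarrow> nat) \<Rightarrow> (nat \<Rightarrow> nat) \<Rightarrow> (nat \<Rightarrow> nat) set" where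
  "Bx f g = {k. \<forall>i. max (f (Suc i)) (g (Suc i)) \<le> k i \<and> k i \<le> min (f i) (g i)}"

definition rfl :: "(nat \<Rightarrow> nat) \<Rightarrow> (nat \<Rightarrow> nat) \<Rightarrow> (nat \<Rightarrow> nat) \<Rightarrow> nat \<Rightarrow> nat" where
  "rfl f g k = (\<lambda>i. max (f (Suc i)) (g (Suc i)) + min (f i) (g i) - k i)"

lemma Bx_il: "k \<in> Bx f g \<longleftrightarrow> il k f \<and> il k g"
  unfolding Bx_def il_def by auto

lemma nat_refl_aux:
  fixes lo hi k :: nat
  assumes "lo \<le> k" "k \<le> hi"
  shows "lo \<le> lo + hi - k" "lo + hi - k \<le> hi" "lo + hi - (lo + hi - k) = k" "lo + hi - k + k = lo + hi"
  using assms by auto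

lemma rfl_Bx: "k \<in> Bx f g \<Longrightarrow> rfl f g k \<in> Bx f g"
proof -
  assume "k \<in> Bx f g"
  then have kB: "\<And>i. max (f (Suc i)) (g (Suc i)) \<le> k i \<and> k i \<le> min (f i) (g i)"
    unfolding Bx_def by auto
  show ?thesis unfolding Bx_def rfl_def
    using nat_refl_aux(1,2)[OF conjunct1[OF kB] conjunct2[OF kB]] by blast
qed

lemma rfl_rfl: "k \<in> Bx f g \<Longrightarrow> rfl f g (rfl f g k) = k"
proof -
  assume "k \<in> Bx f g"
  then have kB: "\<And>i. max (f (Suc i)) (g (Suc i)) \<le> k i \<and> k i \<le> min (f i) (g i)"
    unfolding Bx_def by auto
  show ?thesis unfolding rfl_def
    using nat_refl_aux(3)[OF conjunct1[OF kB] conjunct2[OF kB]] by (intro ext) simp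
qed

lemma sum_max_shift:
  fixes f g :: "nat \<Rightarrow> nat"
  assumes "\<forall>i\<ge>L. f i = 0" "\<forall>i\<ge>L. g i = 0"
  shows "(\<Sum>i<L. max (f (Suc i)) (g (Suc i))) + max (f 0) (g 0) = (\<Sum>i<L. max (f i) (g i))"
proof -
  have "(\<Sum>i<Suc L. max (f i) (g i)) = max (f 0) (g 0) + (\<Sum>i<L. max (f (Suc i)) (g (Suc i)))"
    by (rule sum.lessThan_Suc_shift)
  moreover have "(\<Sum>i<Suc L. max (f i) (g i)) = (\<Sum>i<L. max (f i) (g i))"
    using assms by simp
  ultimately show ?thesis by simp
qed

lemma rfl_sz:
  assumes "fs f" "fs g" "k \<in> Bx f g"
  shows "sz (rfl f g k) + sz k + max (f 0) (g 0) = sz f + sz g"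
proof -
  obtain L1 where L1: "\<forall>i\<ge>L1. f i = 0" using assms(1) unfolding fs_def by blast
  obtain L2 where L2: "\<forall>i\<ge>L2. g i = 0" using assms(2) unfolding fs_def by blast
  define L where "L = max L1 L2"
  have Lf: "\<forall>i\<ge>L. f i = 0" and Lg: "\<forall>i\<ge>L. g i = 0" using L1 L2 unfolding L_def by auto
  have kB: "\<And>i. max (f (Suc i)) (g (Suc i)) \<le> k i \<and> k i \<le> min (f i) (g i)"
    using assms(3) unfolding Bx_def by auto
  have Lk: "\<forall>i\<ge>L. k i = 0" using kB Lf by (metis le0 le_antisym min.bounded_iff)
  have Lr: "\<forall>i\<ge>L. rfl f g k i = 0" using Lf Lg unfolding rfl_def by auto
  have "sz (rfl f g k) + sz k = (\<Sum>i<L. rfl f g k i + k i)"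
    using sz_eq[OF Lr] sz_eq[OF Lk] by (simp add: sum.distrib)
  also have "\<dots> = (\<Sum>i<L. max (f (Suc i)) (g (Suc i)) + min (f i) (g i))"
    by (rule sum.cong) (use nat_refl_aux(4)[OF conjunct1[OF kB] conjunct2[OF kB]] in \<open>auto simp: rfl_def\<close>)
  also have "\<dots> = (\<Sum>i<L. max (f (Suc i)) (g (Suc i))) + (\<Sum>i<L. min (f i) (g i))"
    by (simp add: sum.distrib)
  finally have "sz (rfl f g k) + sz k + max (f 0) (g 0) =
     (\<Sum>i<L. max (f i) (g i)) + (\<Sum>i<L. min (f i) (g i))"
    using sum_max_shift[OF Lf Lg] by simp
  also have "\<dots> = (\<Sum>i<L. f i + g i)"
    by (simp add: sum.distrib[symmetric]) (rule sum.cong, auto)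
  also have "\<dots> = sz f + sz g" using sz_eq[OF Lf] sz_eq[OF Lg] by (simp add: sum.distrib)
  finally show ?thesis .
qed

lemma Bx_card_sym:
  assumes "fs f" "fs g" "d1 + d2 + max (f 0) (g 0) = sz f + sz g"
  shows "card {k\<in>Bx f g. sz k = d1} = card {k\<in>Bx f g. sz k = d2}"
proof -
  have "bij_betw (rfl f g) {k\<in>Bx f g. sz k = d1} {k\<in>Bx f g. sz k = d2}"
  proof (rule bij_betw_byWitness[where f'="rfl f g"])
    show "\<forall>a\<in>{k \<in> Bx f g. sz k = d1}. rfl f g (rfl f g a) = a" using rfl_rfl by auto
    show "\<forall>a\<in>{k \<in> Bx f g. sz k = d2}. rfl f g (rfl f g a) = a" using rfl_rfl by auto
    show "rfl f g ` {k \<in> Bx f g. sz k = d1} \<subseteq> {k \<in> Bx f g. sz k = d2}"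
      using rfl_Bx rfl_sz[OF assms(1,2)] assms(3) by fastforce
    show "rfl f g ` {k \<in> Bx f g. sz k = d2} \<subseteq> {k \<in> Bx f g. sz k = d1}"
      using rfl_Bx rfl_sz[OF assms(1,2)] assms(3) by fastforce
  qed
  then show ?thesis by (rule bij_betw_same_card)
qed



lemma fs_bound: "fs f \<Longrightarrow> (\<And>L. \<forall>i\<ge>L. f i = 0 \<Longrightarrow> P) \<Longrightarrow> P"
  unfolding fs_def by blast

lemma sz_shift:
  assumes "fs l"
  shows "sz l = l 0 + sz (\<lambda>i. l (Suc i))"
proof -
  obtain L where L: "\<forall>i\<ge>L. l i = 0" using assms fs_bound by blast
  have L': "\<forall>i\<ge>L. l (Suc i) = 0" using L by auto
  have "sz l = sum l {..<Suc L}" by (rule sz_eq) (use L in auto)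
  also have "\<dots> = l 0 + (\<Sum>i<L. l (Suc i))" by (rule sum.lessThan_Suc_shift)
  finally show ?thesis using sz_eq[OF L'] by simp
qed

lemma il_fs: "il k f \<Longrightarrow> fs f \<Longrightarrow> fs k"
  unfolding il_def fs_def by (metis le_zero_eq)

lemma il_fs_up: "il f l \<Longrightarrow> fs f \<Longrightarrow> fs l"
  unfolding il_def fs_def by (metis Suc_le_mono le_zero_eq not0_implies_Suc zero_le)

lemma Bx_fs: "k \<in> Bx f g \<Longrightarrow> fs f \<Longrightarrow> fs k"
  using Bx_il il_fs by blast

lemma pieri_local:
  assumes ff: "fs f" and fg: "fs g" and eq: "sz g + e = sz f + a"
  shows "card {k\<in>Bx f g. sz f \<le> sz k + e} = card {l. il f l \<and> il g l \<and> sz l = sz f + a}"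
proof -
  define mx where "mx = max (f 0) (g 0)"
  have "bij_betw (rfl f g) {k\<in>Bx f g. sz f \<le> sz k + e} {k\<in>Bx f g. sz k + mx \<le> sz f + a}"
  proof (rule bij_betw_byWitness[where f'="rfl f g"])
    show "\<forall>a\<in>{k\<in>Bx f g. sz f \<le> sz k + e}. rfl f g (rfl f g a) = a" using rfl_rfl by auto
    show "\<forall>a\<in>{k\<in>Bx f g. sz k + mx \<le> sz f + a}. rfl f g (rfl f g a) = a" using rfl_rfl by auto
    show "rfl f g ` {k\<in>Bx f g. sz f \<le> sz k + e} \<subseteq> {k\<in>Bx f g. sz k + mx \<le> sz f + a}"
    proof
      fix y assume "y \<in> rfl f g ` {k\<in>Bx f g. sz f \<le> sz k + e}"
      then obtain k where k: "k \<in> Bx f g" "sz f \<le> sz k + e" and y: "y = rfl f g k" by auto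
      have "sz y + sz k + mx = sz f + sz g" using rfl_sz[OF ff fg k(1)] y mx_def by simp
      then show "y \<in> {k\<in>Bx f g. sz k + mx \<le> sz f + a}" using k eq rfl_Bx y by auto
    qed
    show "rfl f g ` {k\<in>Bx f g. sz k + mx \<le> sz f + a} \<subseteq> {k\<in>Bx f g. sz f \<le> sz k + e}"
    proof
      fix y assume "y \<in> rfl f g ` {k\<in>Bx f g. sz k + mx \<le> sz f + a}"
      then obtain k where k: "k \<in> Bx f g" "sz k + mx \<le> sz f + a" and y: "y = rfl f g k" by auto
      have "sz y + sz k + mx = sz f + sz g" using rfl_sz[OF ff fg k(1)] y mx_def by simp
      then show "y \<in> {k\<in>Bx f g. sz f \<le> sz k + e}" using k eq rfl_Bx y by auto
    qed
  qed
  then have c1: "card {k\<in>Bx f g. sz f \<le> sz k + e} = card {k\<in>Bx f g. sz k + mx \<le> sz f + a}"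
    by (rule bij_betw_same_card)
  define sh :: "(nat \<Rightarrow> nat) \<Rightarrow> nat \<Rightarrow> nat" where "sh l = (\<lambda>i. l (Suc i))" for l
  define un :: "(nat \<Rightarrow> nat) \<Rightarrow> nat \<Rightarrow> nat" where
    "un k = (\<lambda>i. case i of 0 \<Rightarrow> sz f + a - sz k | Suc j \<Rightarrow> k j)" for k
  have "bij_betw sh {l. il f l \<and> il g l \<and> sz l = sz f + a} {k\<in>Bx f g. sz k + mx \<le> sz f + a}"
  proof (rule bij_betw_byWitness[where f'=un])
    show "\<forall>l\<in>{l. il f l \<and> il g l \<and> sz l = sz f + a}. un (sh l) = l"
    proof
      fix l assume l: "l \<in> {l. il f l \<and> il g l \<and> sz l = sz f + a}"
      then have "sz l = l 0 + sz (sh l)" using sz_shift il_fs_up ff sh_def by auto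
      then show "un (sh l) = l" using l unfolding un_def sh_def
        by (intro ext) (auto split: nat.split)
    qed
    show "\<forall>k\<in>{k\<in>Bx f g. sz k + mx \<le> sz f + a}. sh (un k) = k"
      unfolding un_def sh_def by auto
    show "sh ` {l. il f l \<and> il g l \<and> sz l = sz f + a} \<subseteq> {k\<in>Bx f g. sz k + mx \<le> sz f + a}"
    proof
      fix y assume "y \<in> sh ` {l. il f l \<and> il g l \<and> sz l = sz f + a}"
      then obtain l where l: "il f l" "il g l" "sz l = sz f + a" and y: "y = sh l" by auto
      have "sz l = l 0 + sz y" using sz_shift il_fs_up ff l y sh_def by auto
      moreover have "mx \<le> l 0" using l(1,2) unfolding il_def mx_def by auto
      moreover have "y \<in> Bx f g" using l(1,2) unfolding il_def Bx_def y sh_def by auto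
      ultimately show "y \<in> {k\<in>Bx f g. sz k + mx \<le> sz f + a}" using l(3) by auto
    qed
    show "un ` {k\<in>Bx f g. sz k + mx \<le> sz f + a} \<subseteq> {l. il f l \<and> il g l \<and> sz l = sz f + a}"
    proof
      fix y assume "y \<in> un ` {k\<in>Bx f g. sz k + mx \<le> sz f + a}"
      then obtain k where k: "k \<in> Bx f g" "sz k + mx \<le> sz f + a" and y: "y = un k" by auto
      have kB: "\<And>i. max (f (Suc i)) (g (Suc i)) \<le> k i \<and> k i \<le> min (f i) (g i)"
        using k(1) unfolding Bx_def by auto
      have y0: "y 0 = sz f + a - sz k" and yS: "\<And>j. y (Suc j) = k j" unfolding y un_def by auto
      have "il f y"
        unfolding il_def
      proof
        fix i show "y (Suc i) \<le> f i \<and> f i \<le> y i"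
          using kB k(2) y0 yS unfolding mx_def by (cases i) auto
      qed
      moreover have "il g y"
        unfolding il_def
      proof
        fix i show "y (Suc i) \<le> g i \<and> g i \<le> y i"
          using kB k(2) y0 yS unfolding mx_def by (cases i) auto
      qed
      moreover have "sz y = sz f + a"
      proof -
        have "fs y" using il_fs_up ff calculation(1) by blast
        then have "sz y = y 0 + sz (\<lambda>i. y (Suc i))" by (rule sz_shift)
        also have "(\<lambda>i. y (Suc i)) = k" using yS by auto
        finally show ?thesis using y0 k(2) by simp
      qed
      ultimately show "y \<in> {l. il f l \<and> il g l \<and> sz l = sz f + a}" by auto
    qed
  qed
  then have c2: "card {l. il f l \<and> il g l \<and> sz l = sz f + a} = card {k\<in>Bx f g. sz k + mx \<le> sz f + a}"
    by (rule bij_betw_same_card)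
  show ?thesis using c1 c2 by simp
qed



definition cellsF :: "(nat \<Rightarrow> nat) \<Rightarrow> (nat \<times> nat) set" where
  "cellsF f = {(i, j). j < f i}"

definition ssytF :: "(nat \<Rightarrow> nat) \<Rightarrow> (nat \<times> nat \<Rightarrow> nat) set" where
  "ssytF f = {T. (\<forall>c. c \<notin> cellsF f \<longrightarrow> T c = 0)
     \<and> (\<forall>i j. (i, Suc j) \<in> cellsF f \<longrightarrow> T (i, j) \<le> T (i, Suc j))
     \<and> (\<forall>i j. (Suc i, j) \<in> cellsF f \<longrightarrow> T (i, j) < T (Suc i, j))}"

definition contF :: "(nat \<Rightarrow> nat) \<Rightarrow> (nat \<times> nat \<Rightarrow> nat) \<Rightarrow> (nat \<Rightarrow> nat) \<Rightarrow> bool" where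
  "contF f T h \<longleftrightarrow> (\<forall>k. h k = card {c \<in> cellsF f. T c = k})"

definition KF :: "(nat \<Rightarrow> nat) \<Rightarrow> (nat \<Rightarrow> nat) \<Rightarrow> nat" where
  "KF f h = card {T \<in> ssytF f. contF f T h}"

lemma cellsF_Sigma:
  assumes "\<forall>i\<ge>L. f i = 0"
  shows "cellsF f = Sigma {..<L} (\<lambda>i. {..<f i})"
  using assms unfolding cellsF_def by (auto simp: not_less[symmetric])

lemma cellsF_finite: "fs f \<Longrightarrow> finite (cellsF f)"
  by (metis cellsF_Sigma finite_SigmaI finite_lessThan fs_bound)

lemma card_cellsF: "fs f \<Longrightarrow> card (cellsF f) = sz f"
proof -
  assume "fs f"
  then obtain L where L: "\<forall>i\<ge>L. f i = 0" using fs_bound by blast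
  show ?thesis using cellsF_Sigma[OF L] sz_eq[OF L] by (simp add: card_SigmaI)
qed

lemma finite_bounded_funs:
  assumes "fs B"
  shows "finite {g :: nat \<Rightarrow> nat. \<forall>i. g i \<le> B i}"
proof -
  obtain L where L: "\<forall>i\<ge>L. B i = 0" using assms fs_bound by blast
  define M where "M = sum B {..<L}"
  have "{g :: nat \<Rightarrow> nat. \<forall>i. g i \<le> B i} \<subseteq>
     {g. \<forall>x. (x \<in> {..<L} \<longrightarrow> g x \<in> {..M}) \<and> (x \<notin> {..<L} \<longrightarrow> g x = 0)}"
  proof (clarify)
    fix g :: "nat \<Rightarrow> nat" and x assume g: "\<forall>i. g i \<le> B i"
    show "(x \<in> {..<L} \<longrightarrow> g x \<in> {..M}) \<and> (x \<notin> {..<L} \<longrightarrow> g x = 0)"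
    proof (intro conjI impI)
      assume "x \<in> {..<L}"
      then have "B x \<le> M" unfolding M_def by (intro member_le_sum) auto
      then show "g x \<in> {..M}" using g le_trans by (metis atMost_iff)
    next
      assume "x \<notin> {..<L}" then show "g x = 0" using g L by (metis lessThan_iff not_le le_zero_eq)
    qed
  qed
  moreover have "finite {g :: nat \<Rightarrow> nat. \<forall>x. (x \<in> {..<L} \<longrightarrow> g x \<in> {..M}) \<and> (x \<notin> {..<L} \<longrightarrow> g x = 0)}"
    by (rule finite_set_of_finite_funs) auto
  ultimately show ?thesis by (rule finite_subset)
qed

lemma cont_val:
  assumes "contF f T h" "fs f" "c \<in> cellsF f"
  shows "h (T c) \<ge> 1"
proof -
  have "c \<in> {c' \<in> cellsF f. T c' = T c}" using assms(3) by auto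
  moreover have "finite {c' \<in> cellsF f. T c' = T c}" using cellsF_finite[OF assms(2)] by auto
  ultimately have "card {c' \<in> cellsF f. T c' = T c} \<ge> 1"
    by (metis One_nat_def Suc_leI card_gt_0_iff empty_iff)
  then show ?thesis using assms(1) unfolding contF_def by metis
qed

lemma ssyt_finite:
  assumes "fs f" "fs h"
  shows "finite {T \<in> ssytF f. contF f T h}"
proof -
  obtain L where L: "\<forall>i\<ge>L. h i = 0" using assms(2) fs_bound by blast
  have "{T \<in> ssytF f. contF f T h} \<subseteq>
     {T. \<forall>x. (x \<in> cellsF f \<longrightarrow> T x \<in> {..<L}) \<and> (x \<notin> cellsF f \<longrightarrow> T x = 0)}"
  proof (clarify)
    fix T x assume T: "T \<in> ssytF f" "contF f T h"
    show "(x \<in> cellsF f \<longrightarrow> T x \<in> {..<L}) \<and> (x \<notin> cellsF f \<longrightarrow> T x = 0)"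
    proof (intro conjI impI)
      assume "x \<in> cellsF f"
      then have "h (T x) \<ge> 1" using cont_val T assms(1) by blast
      then show "T x \<in> {..<L}" using L by (metis lessThan_iff not_le not_one_le_zero)
    next
      assume x: "x \<notin> cellsF f"
      have "\<forall>c. c \<notin> cellsF f \<longrightarrow> T c = 0" using T(1) unfolding ssytF_def by blast
      then show "T x = 0" using x by blast
    qed
  qed
  moreover have "finite {T. \<forall>x. (x \<in> cellsF f \<longrightarrow> T x \<in> {..<L}) \<and> (x \<notin> cellsF f \<longrightarrow> T x = 0)}"
    by (rule finite_set_of_finite_funs) (auto simp: cellsF_finite[OF assms(1)])
  ultimately show ?thesis by (rule finite_subset)
qed

lemma row_mono:
  assumes "T \<in> ssytF f" "j \<le> j'" "(i, j') \<in> cellsF f"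
  shows "T (i, j) \<le> T (i, j')"
  using assms(2,3)
proof (induction j')
  case 0 then show ?case by simp
next
  case (Suc j')
  show ?case
  proof (cases "j = Suc j'")
    case True then show ?thesis by simp
  next
    case False
    then have "j \<le> j'" using Suc.prems by simp
    moreover have "(i, j') \<in> cellsF f" using Suc.prems unfolding cellsF_def by auto
    ultimately have "T (i, j) \<le> T (i, j')" using Suc.IH by blast
    also have "\<dots> \<le> T (i, Suc j')" using assms(1) Suc.prems unfolding ssytF_def by blast
    finally show ?thesis .
  qed
qed

lemma downset_eq:
  fixes S :: "nat set"
  assumes "finite S" "\<And>j j0. j \<in> S \<Longrightarrow> j0 \<le> j \<Longrightarrow> j0 \<in> S"
  shows "S = {..<card S}"
proof (intro set_eqI iffI)
  fix j assume "j \<in> S"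
  then have "{..j} \<subseteq> S" using assms(2) by auto
  then have "card {..j} \<le> card S" using assms(1) by (rule card_mono[rotated])
  then show "j \<in> {..<card S}" by simp
next
  fix j assume j: "j \<in> {..<card S}"
  show "j \<in> S"
  proof (rule ccontr)
    assume "j \<notin> S"
    then have "S \<subseteq> {..<j}" using assms(2) by (metis lessThan_iff not_le subsetI)
    then have "card S \<le> j" by (metis card_lessThan card_mono finite_lessThan)
    then show False using j by simp
  qed
qed



lemma partF_dec: "partF f \<Longrightarrow> f (Suc i) \<le> f i"
  unfolding partF_def by blast

lemma partF_fs: "partF f \<Longrightarrow> fs f"
  unfolding partF_def by blast

lemma il_partF: "il k f \<Longrightarrow> partF f \<Longrightarrow> partF k"
  unfolding partF_def il_def using il_fs[of k f] unfolding il_def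
  by (meson le_trans)

lemma il_le: "il k f \<Longrightarrow> k i \<le> f i"
  unfolding il_def by blast

lemma il_ge: "il k f \<Longrightarrow> f (Suc i) \<le> k i"
  unfolding il_def by blast

lemma cellsF_mono: "(\<And>i. k i \<le> f i) \<Longrightarrow> cellsF k \<subseteq> cellsF f"
  unfolding cellsF_def using less_le_trans by fastforce

lemma ssyt_zero: "T \<in> ssytF f \<Longrightarrow> c \<notin> cellsF f \<Longrightarrow> T c = 0"
  unfolding ssytF_def by blast

lemma ssyt_row: "T \<in> ssytF f \<Longrightarrow> (i, Suc j) \<in> cellsF f \<Longrightarrow> T (i, j) \<le> T (i, Suc j)"
  unfolding ssytF_def by blast

lemma ssyt_col: "T \<in> ssytF f \<Longrightarrow> (Suc i, j) \<in> cellsF f \<Longrightarrow> T (i, j) < T (Suc i, j)"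
  unfolding ssytF_def by blast

lemma ssytI:
  assumes "\<And>c. c \<notin> cellsF f \<Longrightarrow> T c = 0"
    "\<And>i j. (i, Suc j) \<in> cellsF f \<Longrightarrow> T (i, j) \<le> T (i, Suc j)"
    "\<And>i j. (Suc i, j) \<in> cellsF f \<Longrightarrow> T (i, j) < T (Suc i, j)"
  shows "T \<in> ssytF f"
  unfolding ssytF_def using assms by blast

lemma branching:
  assumes pf: "partF f" and hN: "\<forall>k>N. h k = 0"
  shows "KF f h = (\<Sum>\<kappa>\<in>{\<kappa>. il \<kappa> f \<and> sz f = sz \<kappa> + h N}. KF \<kappa> (h(N:=0)))"
proof -
  have ff: "fs f" using pf partF_fs by blast
  have fh: "fs h" unfolding fs_def using hN by (metis Suc_le_eq)
  define A where "A = {T \<in> ssytF f. contF f T h}"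
  define shp where "shp T = (\<lambda>i. card {j. j < f i \<and> T (i, j) < N})" for T :: "nat \<times> nat \<Rightarrow> nat"
  define K where "K = {\<kappa>. il \<kappa> f \<and> sz f = sz \<kappa> + h N}"
  define h' where "h' = h(N:=0)"
  define rest where "rest \<kappa> T = (\<lambda>c. if c \<in> cellsF \<kappa> then T c else 0)"
    for \<kappa> :: "nat \<Rightarrow> nat" and T :: "nat \<times> nat \<Rightarrow> nat"
  define ext where "ext \<kappa> T = (\<lambda>c. if c \<in> cellsF \<kappa> then T c else if c \<in> cellsF f then N else 0)"
    for \<kappa> :: "nat \<Rightarrow> nat" and T :: "nat \<times> nat \<Rightarrow> nat"
  have cf: "finite (cellsF f)" using cellsF_finite[OF ff] .
  have F1: "T c \<le> N" if "T \<in> A" "c \<in> cellsF f" for T c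
  proof -
    have "h (T c) \<ge> 1" using cont_val[OF _ ff that(2)] that(1) unfolding A_def by blast
    then show ?thesis using hN by (metis not_le not_one_le_zero)
  qed
  have F2: "{j. j < f i \<and> T (i, j) < N} = {..<shp T i}" if T: "T \<in> A" for T i
  proof -
    have "{j. j < f i \<and> T (i, j) < N} = {..<card {j. j < f i \<and> T (i, j) < N}}"
    proof (rule downset_eq)
      show "finite {j. j < f i \<and> T (i, j) < N}" by (rule finite_subset[of _ "{..<f i}"]) auto
      fix j j0 assume "j \<in> {j. j < f i \<and> T (i, j) < N}" "j0 \<le> j"
      moreover have "T (i, j0) \<le> T (i, j)" if "j < f i" "j0 \<le> j"
        using row_mono[of T f j0 j i] T that unfolding A_def cellsF_def by auto
      ultimately show "j0 \<in> {j. j < f i \<and> T (i, j) < N}" by auto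
    qed
    then show ?thesis unfolding shp_def by simp
  qed
  have F3: "cellsF (shp T) = {c \<in> cellsF f. T c < N}" if T: "T \<in> A" for T
  proof (intro set_eqI)
    fix c
    obtain i j :: nat where c: "c = (i, j)" by (cases c)
    have "j \<in> {..<shp T i} \<longleftrightarrow> j \<in> {j. j < f i \<and> T (i, j) < N}" using F2[OF T, of i] by simp
    then show "c \<in> cellsF (shp T) \<longleftrightarrow> c \<in> {c \<in> cellsF f. T c < N}"
      unfolding c cellsF_def by simp
  qed
  have F4: "il (shp T) f" if T: "T \<in> A" for T
    unfolding il_def
  proof
    fix i
    have fin: "finite {j. j < f i \<and> T (i, j) < N}" by (rule finite_subset[of _ "{..<f i}"]) auto
    have "shp T i \<le> card {..<f i}" unfolding shp_def by (rule card_mono) auto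
    then have "shp T i \<le> f i" by simp
    moreover have "f (Suc i) \<le> shp T i"
    proof -
      have "{..<f (Suc i)} \<subseteq> {j. j < f i \<and> T (i, j) < N}"
      proof
        fix j assume j: "j \<in> {..<f (Suc i)}"
        then have c: "(Suc i, j) \<in> cellsF f" unfolding cellsF_def by auto
        have "T (i, j) < T (Suc i, j)" using ssyt_col[OF _ c] T unfolding A_def by blast
        also have "\<dots> \<le> N" using F1[OF T c] .
        finally show "j \<in> {j. j < f i \<and> T (i, j) < N}"
          using j partF_dec[OF pf, of i] by auto
      qed
      then have "card {..<f (Suc i)} \<le> shp T i" unfolding shp_def by (rule card_mono[OF fin])
      then show ?thesis by simp
    qed
    ultimately show "f (Suc i) \<le> shp T i \<and> shp T i \<le> f i" by simp
  qed
  have F5: "fs (shp T)" if "T \<in> A" for T using il_fs[OF F4[OF that] ff] .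
  have F6: "sz f = sz (shp T) + h N" if T: "T \<in> A" for T
  proof -
    have U: "{c \<in> cellsF f. T c < N} \<union> {c \<in> cellsF f. T c = N} = cellsF f"
      using F1[OF T] by fastforce
    have "card ({c \<in> cellsF f. T c < N} \<union> {c \<in> cellsF f. T c = N})
        = card {c \<in> cellsF f. T c < N} + card {c \<in> cellsF f. T c = N}"
      by (rule card_Un_disjoint) (use cf in auto)
    then have "card (cellsF f) = card {c \<in> cellsF f. T c < N} + card {c \<in> cellsF f. T c = N}"
      unfolding U .
    moreover have "card {c \<in> cellsF f. T c = N} = h N"
    proof -
      have "\<forall>k. h k = card {c \<in> cellsF f. T c = k}" using T unfolding A_def contF_def by blast
      then show ?thesis by simp
    qed
    moreover have "card {c \<in> cellsF f. T c < N} = sz (shp T)"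
      using F3[OF T] card_cellsF[OF F5[OF T]] by simp
    ultimately show ?thesis using card_cellsF[OF ff] by simp
  qed
  have F7a: "rest (shp T) T \<in> ssytF (shp T)" if T: "T \<in> A" for T
  proof (rule ssytI)
    fix c assume "c \<notin> cellsF (shp T)" then show "rest (shp T) T c = 0" unfolding rest_def by simp
  next
    fix i j assume c: "(i, Suc j) \<in> cellsF (shp T)"
    then have c': "(i, j) \<in> cellsF (shp T)" unfolding cellsF_def by auto
    have "(i, Suc j) \<in> cellsF f" using c F3[OF T] by auto
    then show "rest (shp T) T (i, j) \<le> rest (shp T) T (i, Suc j)"
      using c c' ssyt_row T unfolding rest_def A_def by auto
  next
    fix i j assume c: "(Suc i, j) \<in> cellsF (shp T)"
    have "j < shp T (Suc i)" using c unfolding cellsF_def by auto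
    also have "\<dots> \<le> f (Suc i)" using il_le[OF F4[OF T]] .
    also have "\<dots> \<le> shp T i" using il_ge[OF F4[OF T]] .
    finally have c': "(i, j) \<in> cellsF (shp T)" unfolding cellsF_def by auto
    have "(Suc i, j) \<in> cellsF f" using c F3[OF T] by auto
    then show "rest (shp T) T (i, j) < rest (shp T) T (Suc i, j)"
      using c c' ssyt_col T unfolding rest_def A_def by auto
  qed
  have F7b: "contF (shp T) (rest (shp T) T) h'" if T: "T \<in> A" for T
    unfolding contF_def
  proof
    fix k
    have "{c \<in> cellsF (shp T). rest (shp T) T c = k} = (if k < N then {c \<in> cellsF f. T c = k} else {})"
      using F3[OF T] unfolding rest_def by auto
    note E = this
    have hk: "h k = card {c \<in> cellsF f. T c = k}" using T unfolding A_def contF_def by blast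
    show "h' k = card {c \<in> cellsF (shp T). rest (shp T) T c = k}"
    proof (cases "k < N")
      case True
      then have "{c \<in> cellsF (shp T). rest (shp T) T c = k} = {c \<in> cellsF f. T c = k}"
        using E by simp
      then show ?thesis using hk True unfolding h'_def by simp
    next
      case False
      then have X: "{c \<in> cellsF (shp T). rest (shp T) T c = k} = {}"
        using E by simp
      have "h' k = 0" unfolding h'_def using hN False by auto
      then show ?thesis unfolding X by simp
    qed
  qed
  have F8: "ext (shp T) (rest (shp T) T) = T" if T: "T \<in> A" for T
  proof
    fix c
    show "ext (shp T) (rest (shp T) T) c = T c"
    proof (cases "c \<in> cellsF f")
      case True
      then show ?thesis using F3[OF T] F1[OF T True] unfolding ext_def rest_def by auto
    next
      case False
      then have "c \<notin> cellsF (shp T)" using F3[OF T] by auto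
      moreover have "T c = 0" using ssyt_zero[of T f c] False T unfolding A_def by blast
      ultimately show ?thesis using False unfolding ext_def rest_def by simp
    qed
  qed
  have B0: "cellsF \<kappa> \<subseteq> cellsF f" if "\<kappa> \<in> K" for \<kappa>
    using cellsF_mono[of \<kappa> f] il_le that unfolding K_def by blast
  have B1: "T' c < N" if k: "\<kappa> \<in> K" and T': "T' \<in> ssytF \<kappa>" "contF \<kappa> T' h'" and c: "c \<in> cellsF \<kappa>"
    for \<kappa> T' c
  proof -
    have fk: "fs \<kappa>" using k il_fs ff unfolding K_def by blast
    have "h' (T' c) \<ge> 1" using cont_val[OF T'(2) fk c] .
    then show ?thesis unfolding h'_def using hN
      by (metis fun_upd_apply linorder_neqE_nat not_one_le_zero)
  qed
  have B2: "ext \<kappa> T' \<in> ssytF f" if k: "\<kappa> \<in> K" and T': "T' \<in> ssytF \<kappa>" "contF \<kappa> T' h'" for \<kappa> T'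
  proof (rule ssytI)
    fix c assume "c \<notin> cellsF f" then show "ext \<kappa> T' c = 0" using B0[OF k] unfolding ext_def by auto
  next
    fix i j assume c: "(i, Suc j) \<in> cellsF f"
    then have c': "(i, j) \<in> cellsF f" unfolding cellsF_def by auto
    show "ext \<kappa> T' (i, j) \<le> ext \<kappa> T' (i, Suc j)"
    proof (cases "(i, Suc j) \<in> cellsF \<kappa>")
      case True
      then have "(i, j) \<in> cellsF \<kappa>" unfolding cellsF_def by auto
      then show ?thesis using True ssyt_row[OF T'(1) True] unfolding ext_def by auto
    next
      case False
      then show ?thesis using c c' B1[OF k T', of "(i, j)"] unfolding ext_def by auto
    qed
  next
    fix i j assume c: "(Suc i, j) \<in> cellsF f"
    have ki: "il \<kappa> f" using k unfolding K_def by blast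
    have "j < f (Suc i)" using c unfolding cellsF_def by auto
    also have "\<dots> \<le> \<kappa> i" using il_ge[OF ki] .
    finally have c': "(i, j) \<in> cellsF \<kappa>" unfolding cellsF_def by auto
    show "ext \<kappa> T' (i, j) < ext \<kappa> T' (Suc i, j)"
    proof (cases "(Suc i, j) \<in> cellsF \<kappa>")
      case True
      then show ?thesis using c' ssyt_col[OF T'(1) True] unfolding ext_def by auto
    next
      case False
      then show ?thesis using c c' B1[OF k T' c'] unfolding ext_def by auto
    qed
  qed
  have B3: "shp (ext \<kappa> T') = \<kappa>" if k: "\<kappa> \<in> K" and T': "T' \<in> ssytF \<kappa>" "contF \<kappa> T' h'" for \<kappa> T'
  proof
    fix i
    have ki: "\<kappa> i \<le> f i" using k il_le unfolding K_def by blast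
    have "{j. j < f i \<and> ext \<kappa> T' (i, j) < N} = {..<\<kappa> i}"
      using B1[OF k T'] ki unfolding ext_def cellsF_def by auto
    then show "shp (ext \<kappa> T') i = \<kappa> i" unfolding shp_def by simp
  qed
  have B4: "contF f (ext \<kappa> T') h" if k: "\<kappa> \<in> K" and T': "T' \<in> ssytF \<kappa>" "contF \<kappa> T' h'" for \<kappa> T'
    unfolding contF_def
  proof
    fix k'
    have fk: "fs \<kappa>" using k il_fs ff unfolding K_def by blast
    show "h k' = card {c \<in> cellsF f. ext \<kappa> T' c = k'}"
    proof (cases "k' < N")
      case True
      then have "{c \<in> cellsF f. ext \<kappa> T' c = k'} = {c \<in> cellsF \<kappa>. T' c = k'}"
        using B0[OF k] unfolding ext_def by auto
      moreover have "h' k' = card {c \<in> cellsF \<kappa>. T' c = k'}" using T'(2) unfolding contF_def by blast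
      ultimately show ?thesis using True unfolding h'_def by simp
    next
      case False
      show ?thesis
      proof (cases "k' = N")
        case True
        then have "{c \<in> cellsF f. ext \<kappa> T' c = k'} = cellsF f - cellsF \<kappa>"
          using B1[OF k T'] unfolding ext_def by auto
        then have "card {c \<in> cellsF f. ext \<kappa> T' c = k'} = sz f - sz \<kappa>"
          using card_Diff_subset[OF finite_subset[OF B0[OF k] cf] B0[OF k]]
            card_cellsF[OF ff] card_cellsF[OF fk] by simp
        then show ?thesis using k True unfolding K_def by simp
      next
        case False
        then have X: "{c \<in> cellsF f. ext \<kappa> T' c = k'} = {}"
          using B1[OF k T'] \<open>\<not> k' < N\<close> unfolding ext_def by auto
        have "h k' = 0" using hN False \<open>\<not> k' < N\<close> by simp
        then show ?thesis unfolding X by simp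
      qed
    qed
  qed
  have B5: "rest \<kappa> (ext \<kappa> T') = T'" if T': "T' \<in> ssytF \<kappa>" for \<kappa> T'
    using ssyt_zero[OF T'] unfolding rest_def ext_def by (intro ext) auto
  have finA: "finite A" unfolding A_def by (rule ssyt_finite[OF ff fh])
  have finK: "finite K"
    by (rule finite_subset[OF _ finite_bounded_funs[OF ff]]) (auto simp: K_def il_def)
  have Aeq: "A = (\<Union>\<kappa>\<in>K. {T \<in> A. shp T = \<kappa>})"
    using F4 F6 unfolding K_def by auto
  have "card A = (\<Sum>\<kappa>\<in>K. card {T \<in> A. shp T = \<kappa>})"
    by (subst Aeq, rule card_UN_disjoint) (use finA finK in auto)
  also have "\<dots> = (\<Sum>\<kappa>\<in>K. KF \<kappa> h')"
  proof (rule sum.cong[OF refl])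
    fix \<kappa> assume k: "\<kappa> \<in> K"
    have "bij_betw (rest \<kappa>) {T \<in> A. shp T = \<kappa>} {T' \<in> ssytF \<kappa>. contF \<kappa> T' h'}"
    proof (rule bij_betw_byWitness[where f'="ext \<kappa>"])
      show "\<forall>a\<in>{T \<in> A. shp T = \<kappa>}. ext \<kappa> (rest \<kappa> a) = a" using F8 by auto
      show "\<forall>a\<in>{T' \<in> ssytF \<kappa>. contF \<kappa> T' h'}. rest \<kappa> (ext \<kappa> a) = a" using B5 by auto
      show "rest \<kappa> ` {T \<in> A. shp T = \<kappa>} \<subseteq> {T' \<in> ssytF \<kappa>. contF \<kappa> T' h'}" using F7a F7b by auto
      show "ext \<kappa> ` {T' \<in> ssytF \<kappa>. contF \<kappa> T' h'} \<subseteq> {T \<in> A. shp T = \<kappa>}"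
        using B2[OF k] B3[OF k] B4[OF k] unfolding A_def by auto
    qed
    then show "card {T \<in> A. shp T = \<kappa>} = KF \<kappa> h'" unfolding KF_def by (rule bij_betw_same_card)
  qed
  finally show ?thesis unfolding A_def KF_def K_def h'_def by simp
qed



definition pairs :: "(nat \<Rightarrow> nat) \<Rightarrow> ((nat \<Rightarrow> nat) \<times> (nat \<Rightarrow> nat)) set" where
  "pairs h = {(g1, g2). \<forall>k. g1 k + g2 k = h k}"

definition convF :: "((nat \<Rightarrow> nat) \<Rightarrow> nat) \<Rightarrow> ((nat \<Rightarrow> nat) \<Rightarrow> nat) \<Rightarrow> (nat \<Rightarrow> nat) \<Rightarrow> nat" where
  "convF F G h = (\<Sum>(g1, g2)\<in>pairs h. F g1 * G g2)"

definition row :: "nat \<Rightarrow> nat \<Rightarrow> nat" where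
  "row a = (\<lambda>i. if i = 0 then a else 0)"

definition HSF :: "(nat \<Rightarrow> nat) \<Rightarrow> nat \<Rightarrow> (nat \<Rightarrow> nat) set" where
  "HSF f a = {l. il f l \<and> sz l = sz f + a}"

lemma pairs_finite: "fs h \<Longrightarrow> finite (pairs h)"
proof -
  assume h: "fs h"
  have "pairs h \<subseteq> {g. \<forall>i. g i \<le> h i} \<times> {g. \<forall>i. g i \<le> h i}"
  proof
    fix p assume "p \<in> pairs h"
    then obtain g1 g2 where p: "p = (g1, g2)" "\<forall>k. g1 k + g2 k = h k" unfolding pairs_def by auto
    have "\<forall>i. g1 i \<le> h i" using p(2) le_add1 by metis
    moreover have "\<forall>i. g2 i \<le> h i" using p(2) le_add2 by metis
    ultimately show "p \<in> {g. \<forall>i. g i \<le> h i} \<times> {g. \<forall>i. g i \<le> h i}" using p(1) by auto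
  qed
  then show ?thesis using finite_bounded_funs[OF h] finite_subset by blast
qed

lemma zero_fun_fs: "fs (\<lambda>_. 0)" unfolding fs_def by auto

lemma KF_zero:
  assumes "fs f"
  shows "KF f (\<lambda>_. 0) = (if f = (\<lambda>_. 0) then 1 else 0)"
proof (cases "f = (\<lambda>_. 0)")
  case True
  have c: "cellsF f = {}" unfolding True cellsF_def by auto
  have "{T \<in> ssytF f. contF f T (\<lambda>_. 0)} = {\<lambda>_. 0}"
    unfolding ssytF_def contF_def c by auto
  then show ?thesis unfolding KF_def using True by simp
next
  case False
  then obtain i where i: "f i \<noteq> 0" by auto
  then have c: "(i, 0) \<in> cellsF f" unfolding cellsF_def by auto
  have X: "{T \<in> ssytF f. contF f T (\<lambda>_. 0)} = {}"
  proof (rule ccontr)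
    assume "{T \<in> ssytF f. contF f T (\<lambda>_. 0)} \<noteq> {}"
    then obtain T where "contF f T (\<lambda>_. 0)" by auto
    from cont_val[OF this assms c] show False by simp
  qed
  show ?thesis unfolding KF_def X using False by simp
qed

lemma sz_row: "sz (row a) = a"
  using sz_eq[of 1 "row a"] unfolding row_def by simp

lemma fs_row: "fs (row a)" unfolding fs_def row_def by (rule exI[of _ 1]) auto

lemma partF_row: "partF (row a)" unfolding partF_def using fs_row unfolding row_def by auto

lemma il_row_iff: "il \<kappa> (row a) \<longleftrightarrow> \<kappa> = row (\<kappa> 0) \<and> \<kappa> 0 \<le> a"
proof
  assume "il \<kappa> (row a)"
  then have "\<forall>i. row a (Suc i) \<le> \<kappa> i \<and> \<kappa> i \<le> row a i" unfolding il_def by blast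
  then have H: "\<And>i. \<kappa> i \<le> row a i" by blast
  have "\<kappa> = row (\<kappa> 0)"
  proof
    fix i show "\<kappa> i = row (\<kappa> 0) i"
      using H[of i] unfolding row_def by (cases i) auto
  qed
  moreover have "\<kappa> 0 \<le> a" using H[of 0] unfolding row_def by simp
  ultimately show "\<kappa> = row (\<kappa> 0) \<and> \<kappa> 0 \<le> a" by blast
next
  assume "\<kappa> = row (\<kappa> 0) \<and> \<kappa> 0 \<le> a"
  then have k1: "\<kappa> = row (\<kappa> 0)" and k2: "\<kappa> 0 \<le> a" by blast+
  show "il \<kappa> (row a)" unfolding il_def
  proof
    fix i
    have "\<kappa> i = row (\<kappa> 0) i" using k1 by (rule fun_cong)
    then show "row a (Suc i) \<le> \<kappa> i \<and> \<kappa> i \<le> row a i"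
      using k2 unfolding row_def by (cases i) auto
  qed
qed

lemma K_row: "{\<kappa>. il \<kappa> (row a) \<and> sz (row a) = sz \<kappa> + e} = (if e \<le> a then {row (a - e)} else {})"
proof (intro set_eqI iffI)
  fix x assume "x \<in> {\<kappa>. il \<kappa> (row a) \<and> sz (row a) = sz \<kappa> + e}"
  then have x: "il x (row a)" "sz (row a) = sz x + e" by blast+
  then have x1: "x = row (x 0)" and x2: "x 0 \<le> a" using il_row_iff by blast+
  have "sz x = x 0" using sz_row[of "x 0"] x1 by simp
  then have "a = x 0 + e" using x(2) sz_row by simp
  then show "x \<in> (if e \<le> a then {row (a - e)} else {})" using x1 by simp
next
  fix x assume "x \<in> (if e \<le> a then {row (a - e)} else {})"
  then have "e \<le> a" "x = row (a - e)" by (auto split: if_splits)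
  moreover have "il (row (a - e)) (row a)" unfolding il_row_iff by (simp add: row_def)
  ultimately show "x \<in> {\<kappa>. il \<kappa> (row a) \<and> sz (row a) = sz \<kappa> + e}" by (simp add: sz_row)
qed

lemma il_sz: "il k f \<Longrightarrow> fs f \<Longrightarrow> sz k \<le> sz f"
proof -
  assume a: "il k f" "fs f"
  obtain L where L: "\<forall>i\<ge>L. f i = 0" using a(2) fs_bound by blast
  have Lk: "\<forall>i\<ge>L. k i = 0" using L il_le[OF a(1)] by (metis le_zero_eq)
  show ?thesis unfolding sz_eq[OF L] sz_eq[OF Lk] by (rule sum_mono) (rule il_le[OF a(1)])
qed

lemma HSF_finite: "fs f \<Longrightarrow> finite (HSF f a)"
proof -
  assume f: "fs f"
  define B where "B i = (case i of 0 \<Rightarrow> sz f + a | Suc j \<Rightarrow> f j)" for i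
  have "fs B" using f unfolding fs_def B_def
    by (metis (no_types, lifting) Suc_le_mono nat.case(2) not0_implies_Suc zero_le le_zero_eq)
  have "HSF f a \<subseteq> {g. \<forall>i. g i \<le> B i}"
  proof (clarify)
    fix l i assume l: "l \<in> HSF f a"
    then have il: "il f l" and s: "sz l = sz f + a" unfolding HSF_def by auto
    have "sz l = l 0 + sz (\<lambda>i. l (Suc i))" using sz_shift il_fs_up[OF il f] by blast
    then show "l i \<le> B i" using il_ge[OF il] s unfolding B_def by (cases i) auto
  qed
  then show ?thesis using finite_bounded_funs[OF \<open>fs B\<close>] finite_subset by blast
qed

lemma sum_snd_card:
  fixes A B :: "('a \<times> 'b) set"
  assumes fA: "finite A" and fB: "finite B"
    and c: "\<And>y. card {x. (x, y) \<in> A} = card {x. (x, y) \<in> B}"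
  shows "(\<Sum>p\<in>A. g (snd p)) = (\<Sum>p\<in>B. (g (snd p) :: nat))"
proof -
  have key: "(\<Sum>p\<in>S. g (snd p)) = (\<Sum>y\<in>snd ` A \<union> snd ` B. card {x. (x, y) \<in> S} * g y)"
    if fS: "finite S" and sub: "snd ` S \<subseteq> snd ` A \<union> snd ` B" for S :: "('a \<times> 'b) set"
  proof -
    have "(\<Sum>p\<in>S. g (snd p)) = (\<Sum>y\<in>snd ` A \<union> snd ` B. \<Sum>p\<in>{p \<in> S. snd p = y}. g (snd p))"
      by (rule sum.group[symmetric]) (use fS fA fB sub in auto)
    also have "\<dots> = (\<Sum>y\<in>snd ` A \<union> snd ` B. card {x. (x, y) \<in> S} * g y)"
    proof (rule sum.cong[OF refl])
      fix y
      have "(\<Sum>p\<in>{p \<in> S. snd p = y}. g (snd p)) = card {p \<in> S. snd p = y} * g y" by simp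
      moreover have "card {p \<in> S. snd p = y} = card {x. (x, y) \<in> S}"
      proof (rule bij_betw_same_card[of fst])
        show "bij_betw fst {p \<in> S. snd p = y} {x. (x, y) \<in> S}"
          by (rule bij_betw_byWitness[where f'="\<lambda>x. (x, y)"]) auto
      qed
      ultimately show "(\<Sum>p\<in>{p \<in> S. snd p = y}. g (snd p)) = card {x. (x, y) \<in> S} * g y" by simp
    qed
    finally show ?thesis .
  qed
  show ?thesis using key[OF fA] key[OF fB] c by simp
qed

lemma conv_split:
  assumes hN: "\<forall>k>N. h k = 0"
  shows "(\<Sum>p\<in>pairs h. F (fst p) (snd p)) =
    (\<Sum>e1\<le>h N. \<Sum>p\<in>pairs (h(N:=0)). F ((fst p)(N:=e1)) ((snd p)(N:=h N - e1)))"
proof -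
  define S where "S = Sigma {..h N} (\<lambda>_. pairs (h(N:=0)))"
  have "(\<Sum>e1\<le>h N. \<Sum>p\<in>pairs (h(N:=0)). F ((fst p)(N:=e1)) ((snd p)(N:=h N - e1)))
      = (\<Sum>q\<in>S. F ((fst (snd q))(N:=fst q)) ((snd (snd q))(N:=h N - fst q)))"
    unfolding S_def by (subst sum.cartesian_product) (simp add: split_def)
  also have "\<dots> = (\<Sum>p\<in>pairs h. F (fst p) (snd p))"
    apply (rule sum.reindex_bij_witness[where i="\<lambda>p. (fst p N, ((fst p)(N:=0), (snd p)(N:=0)))"
        and j="\<lambda>q. ((fst (snd q))(N:=fst q), (snd (snd q))(N:=h N - fst q))"])
    subgoal for q
      unfolding S_def pairs_def by (cases q) (auto intro!: ext elim!: allE[of _ N])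
    subgoal for q
      unfolding S_def pairs_def by (cases q) auto
    subgoal for p
      unfolding pairs_def by (cases p) (auto intro!: ext elim!: allE[of _ N])
    subgoal for p
      unfolding S_def pairs_def by (cases p) (auto elim!: allE[of _ N])
    subgoal for q by simp
    done
  finally show ?thesis by simp
qed



lemma il_up_partF: "il f l \<Longrightarrow> partF f \<Longrightarrow> partF l"
  unfolding partF_def using il_fs_up[of f l] unfolding il_def by (meson le_trans)

lemma pieri_base:
  assumes pf: "partF f"
  shows "convF (KF f) (KF (row a)) (\<lambda>_. 0) = (\<Sum>l\<in>HSF f a. KF l (\<lambda>_. 0))"
proof -
  have ff: "fs f" using pf partF_fs by blast
  have P: "pairs (\<lambda>_. 0) = {((\<lambda>_. 0), (\<lambda>_. 0))}" unfolding pairs_def by (auto intro!: ext)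
  have r0: "row a = (\<lambda>_. 0) \<longleftrightarrow> a = 0"
  proof
    assume "row a = (\<lambda>_. 0)" then have "row a 0 = 0" by simp
    then show "a = 0" unfolding row_def by simp
  qed (auto simp: row_def)
  have L: "convF (KF f) (KF (row a)) (\<lambda>_. 0) = (if f = (\<lambda>_. 0) \<and> a = 0 then 1 else 0)"
    unfolding convF_def P using KF_zero[OF ff] KF_zero[OF fs_row, of a] r0 by simp
  have "(\<Sum>l\<in>HSF f a. KF l (\<lambda>_. 0)) = (\<Sum>l\<in>HSF f a. if l = (\<lambda>_. 0) then 1 else 0)"
  proof (rule sum.cong[OF refl])
    fix l assume "l \<in> HSF f a"
    then have "fs l" using il_fs_up ff unfolding HSF_def by blast
    then show "KF l (\<lambda>_. 0) = (if l = (\<lambda>_. 0) then 1 else 0)" using KF_zero by blast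
  qed
  also have "\<dots> = (if (\<lambda>_. 0) \<in> HSF f a then 1 else 0)"
    by (rule sum.delta[OF HSF_finite[OF ff]])
  also have "\<dots> = (if f = (\<lambda>_. 0) \<and> a = 0 then 1 else 0)"
  proof -
    have sz0: "sz (\<lambda>_. 0) = 0" unfolding sz_def by simp
    have "il f (\<lambda>_. 0) \<longleftrightarrow> f = (\<lambda>_. 0)" unfolding il_def by (auto intro!: ext)
    then have "(\<lambda>_. 0) \<in> HSF f a \<longleftrightarrow> f = (\<lambda>_. 0) \<and> a = 0"
      unfolding HSF_def using sz0 by auto
    then show ?thesis by simp
  qed
  finally show ?thesis using L by simp
qed

lemma pieri_N:
  "\<forall>k\<ge>N. h k = 0 \<Longrightarrow> partF f \<Longrightarrow> convF (KF f) (KF (row a)) h = (\<Sum>l\<in>HSF f a. KF l h)"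
proof (induction N arbitrary: f a h)
  case 0
  then have "h = (\<lambda>_. 0)" by auto
  then show ?case using pieri_base[OF 0(2)] by simp
next
  case (Suc N)
  have pf: "partF f" using Suc.prems(2) .
  have ff: "fs f" using pf partF_fs by blast
  have hN: "\<forall>k>N. h k = 0" using Suc.prems(1) by auto
  define e where "e = h N"
  define h' where "h' = h(N:=0)"
  have h'N: "\<forall>k\<ge>N. h' k = 0" unfolding h'_def using hN by auto
  have fh': "fs h'" unfolding fs_def using h'N by blast
  define K where "K f' e' = {\<kappa>. il \<kappa> f' \<and> sz f' = sz \<kappa> + e'}" for f' e'
  have pz: "fst p k = 0 \<and> snd p k = 0" if pp: "p \<in> pairs h'" and kN: "k \<ge> N" for p k
  proof -
    obtain x y where p: "p = (x, y)" "\<forall>k. x k + y k = h' k" using pp unfolding pairs_def by (cases p) auto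
    have "x k + y k = 0" using p(2) h'N kN by metis
    then show ?thesis using p(1) by simp
  qed
  have brF: "KF f ((fst p)(N:=e1)) = (\<Sum>\<kappa>\<in>K f e1. KF \<kappa> (fst p))" if p: "p \<in> pairs h'" for p e1
  proof -
    define G where "G = (fst p)(N:=e1)"
    have "\<forall>k>N. G k = 0" using pz[OF p] unfolding G_def by auto
    from branching[OF pf this] have X: "KF f G = (\<Sum>\<kappa>\<in>{\<kappa>. il \<kappa> f \<and> sz f = sz \<kappa> + G N}. KF \<kappa> (G(N:=0)))" .
    have G1: "G N = e1" unfolding G_def by simp
    have G2: "G(N:=0) = fst p" using pz[OF p, of N] unfolding G_def by (auto intro!: ext)
    have "KF f G = (\<Sum>\<kappa>\<in>K f e1. KF \<kappa> (fst p))" using X unfolding G1 G2 K_def .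
    then show ?thesis unfolding G_def .
  qed
  have brR: "KF (row a) ((snd p)(N:=e2)) = (if e2 \<le> a then KF (row (a - e2)) (snd p) else 0)"
    if p: "p \<in> pairs h'" for p e2
  proof -
    define G where "G = (snd p)(N:=e2)"
    have "\<forall>k>N. G k = 0" using pz[OF p] unfolding G_def by auto
    from branching[OF partF_row this] have X: "KF (row a) G = (\<Sum>\<kappa>\<in>{\<kappa>. il \<kappa> (row a) \<and> sz (row a) = sz \<kappa> + G N}. KF \<kappa> (G(N:=0)))" .
    have G1: "G N = e2" unfolding G_def by simp
    have G2: "G(N:=0) = snd p" using pz[OF p, of N] unfolding G_def by (auto intro!: ext)
    have "KF (row a) G = (if e2 \<le> a then KF (row (a - e2)) (snd p) else 0)"
      using X unfolding G1 G2 K_row by simp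
    then show ?thesis unfolding G_def .
  qed
  have finK: "finite (K f' e')" if "fs f'" for f' e'
    by (rule finite_subset[OF _ finite_bounded_funs[OF that]]) (auto simp: K_def il_def)
  have "convF (KF f) (KF (row a)) h = (\<Sum>p\<in>pairs h. KF f (fst p) * KF (row a) (snd p))"
    unfolding convF_def by (simp add: split_def)
  also have "\<dots> = (\<Sum>e1\<le>e. \<Sum>p\<in>pairs h'. KF f ((fst p)(N:=e1)) * KF (row a) ((snd p)(N:=e - e1)))"
    unfolding e_def h'_def by (rule conv_split[OF hN])
  also have "\<dots> = (\<Sum>e1\<le>e. if e - e1 \<le> a then (\<Sum>\<kappa>\<in>K f e1. convF (KF \<kappa>) (KF (row (a - (e - e1)))) h') else 0)"
  proof (rule sum.cong[OF refl])
    fix e1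
    have "(\<Sum>p\<in>pairs h'. KF f ((fst p)(N:=e1)) * KF (row a) ((snd p)(N:=e - e1)))
      = (\<Sum>p\<in>pairs h'. (\<Sum>\<kappa>\<in>K f e1. KF \<kappa> (fst p)) * (if e - e1 \<le> a then KF (row (a - (e - e1))) (snd p) else 0))"
      by (rule sum.cong[OF refl]) (simp add: brF brR)
    also have "\<dots> = (if e - e1 \<le> a then (\<Sum>\<kappa>\<in>K f e1. convF (KF \<kappa>) (KF (row (a - (e - e1)))) h') else 0)"
    proof (cases "e - e1 \<le> a")
      case True
      have "(\<Sum>p\<in>pairs h'. (\<Sum>\<kappa>\<in>K f e1. KF \<kappa> (fst p)) * KF (row (a - (e - e1))) (snd p))
          = (\<Sum>p\<in>pairs h'. \<Sum>\<kappa>\<in>K f e1. KF \<kappa> (fst p) * KF (row (a - (e - e1))) (snd p))"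
        by (simp add: sum_distrib_right)
      also have "\<dots> = (\<Sum>\<kappa>\<in>K f e1. \<Sum>p\<in>pairs h'. KF \<kappa> (fst p) * KF (row (a - (e - e1))) (snd p))"
        by (rule sum.swap)
      also have "\<dots> = (\<Sum>\<kappa>\<in>K f e1. convF (KF \<kappa>) (KF (row (a - (e - e1)))) h')"
        unfolding convF_def by (simp add: split_def)
      finally show ?thesis using True by simp
    next
      case False then show ?thesis by simp
    qed
    finally show "(\<Sum>p\<in>pairs h'. KF f ((fst p)(N:=e1)) * KF (row a) ((snd p)(N:=e - e1)))
      = (if e - e1 \<le> a then (\<Sum>\<kappa>\<in>K f e1. convF (KF \<kappa>) (KF (row (a - (e - e1)))) h') else 0)" .
  qed
  also have "\<dots> = (\<Sum>e1\<le>e. if e - e1 \<le> a then (\<Sum>\<kappa>\<in>K f e1. \<Sum>\<rho>\<in>HSF \<kappa> (a - (e - e1)). KF \<rho> h') else 0)"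
  proof (rule sum.cong[OF refl])
    fix e1
    have "convF (KF \<kappa>) (KF (row (a - (e - e1)))) h' = (\<Sum>\<rho>\<in>HSF \<kappa> (a - (e - e1)). KF \<rho> h')"
      if "\<kappa> \<in> K f e1" for \<kappa>
    proof -
      have "partF \<kappa>" using that il_partF pf unfolding K_def by blast
      then show ?thesis using Suc.IH h'N by blast
    qed
    then show "(if e - e1 \<le> a then (\<Sum>\<kappa>\<in>K f e1. convF (KF \<kappa>) (KF (row (a - (e - e1)))) h') else 0) =
       (if e - e1 \<le> a then (\<Sum>\<kappa>\<in>K f e1. \<Sum>\<rho>\<in>HSF \<kappa> (a - (e - e1)). KF \<rho> h') else 0)"
      by simp
  qed
  finally have LHS1: "convF (KF f) (KF (row a)) h =
     (\<Sum>e1\<le>e. if e - e1 \<le> a then (\<Sum>\<kappa>\<in>K f e1. \<Sum>\<rho>\<in>HSF \<kappa> (a - (e - e1)). KF \<rho> h') else 0)" .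
  define KK where "KK = {\<kappa>. il \<kappa> f \<and> sz f \<le> sz \<kappa> + e \<and> e \<le> a + (sz f - sz \<kappa>)}"
  define X where "X e1 \<kappa> = (\<Sum>\<rho>\<in>HSF \<kappa> (a - (e - e1)). KF \<rho> h')" for e1 \<kappa>
  have finKK: "finite KK"
    by (rule finite_subset[OF _ finite_bounded_funs[OF ff]]) (auto simp: KK_def il_def)
  have szk: "sz \<kappa> \<le> sz f" if "il \<kappa> f" for \<kappa> using il_sz[OF that ff] .
  have L2: "(\<Sum>\<kappa>\<in>KK. X (sz f - sz \<kappa>) \<kappa>) =
     (\<Sum>e1\<le>e. if e - e1 \<le> a then (\<Sum>\<kappa>\<in>K f e1. X e1 \<kappa>) else 0)"
  proof -
    have "(\<Sum>\<kappa>\<in>KK. X (sz f - sz \<kappa>) \<kappa>) =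
        (\<Sum>e1\<in>{..e}. \<Sum>\<kappa>\<in>{\<kappa>\<in>KK. sz f - sz \<kappa> = e1}. X (sz f - sz \<kappa>) \<kappa>)"
      by (rule sum.group[symmetric]) (use finKK in \<open>auto simp: KK_def\<close>)
    also have "\<dots> = (\<Sum>e1\<le>e. if e - e1 \<le> a then (\<Sum>\<kappa>\<in>K f e1. X e1 \<kappa>) else 0)"
    proof (rule sum.cong[OF refl])
      fix e1 assume e1: "e1 \<in> {..e}"
      have S: "{\<kappa>\<in>KK. sz f - sz \<kappa> = e1} = (if e - e1 \<le> a then K f e1 else {})"
      proof (cases "e - e1 \<le> a")
        case True
        have "{\<kappa>\<in>KK. sz f - sz \<kappa> = e1} = K f e1"
        proof (intro set_eqI iffI)
          fix \<kappa> assume "\<kappa> \<in> {\<kappa>\<in>KK. sz f - sz \<kappa> = e1}"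
          then have k: "il \<kappa> f" "sz f - sz \<kappa> = e1" unfolding KK_def by auto
          then show "\<kappa> \<in> K f e1" using szk[OF k(1)] unfolding K_def by auto
        next
          fix \<kappa> assume "\<kappa> \<in> K f e1"
          then have k: "il \<kappa> f" "sz f = sz \<kappa> + e1" unfolding K_def by auto
          then show "\<kappa> \<in> {\<kappa>\<in>KK. sz f - sz \<kappa> = e1}" using e1 True unfolding KK_def by auto
        qed
        then show ?thesis using True by simp
      next
        case False
        have "{\<kappa>\<in>KK. sz f - sz \<kappa> = e1} = {}" using False unfolding KK_def by auto
        then show ?thesis using False by simp
      qed
      show "(\<Sum>\<kappa>\<in>{\<kappa>\<in>KK. sz f - sz \<kappa> = e1}. X (sz f - sz \<kappa>) \<kappa>) =
          (if e - e1 \<le> a then (\<Sum>\<kappa>\<in>K f e1. X e1 \<kappa>) else 0)"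
      proof (cases "e - e1 \<le> a")
        case True
        have "(\<Sum>\<kappa>\<in>{\<kappa>\<in>KK. sz f - sz \<kappa> = e1}. X (sz f - sz \<kappa>) \<kappa>) =
            (\<Sum>\<kappa>\<in>{\<kappa>\<in>KK. sz f - sz \<kappa> = e1}. X e1 \<kappa>)"
          by (rule sum.cong) auto
        then show ?thesis using S True by simp
      next
        case False
        then have "{\<kappa>\<in>KK. sz f - sz \<kappa> = e1} = {}" using S by presburger
        then show ?thesis using False by (simp only: sum.empty if_False)
      qed
    qed
    finally show ?thesis .
  qed
  have finH: "\<And>\<kappa>. \<kappa> \<in> KK \<Longrightarrow> finite (HSF \<kappa> (a - (e - (sz f - sz \<kappa>))))"
    using HSF_finite il_fs ff unfolding KK_def by blast
  define SL where "SL = Sigma KK (\<lambda>\<kappa>. HSF \<kappa> (a - (e - (sz f - sz \<kappa>))))"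
  have L3: "(\<Sum>\<kappa>\<in>KK. X (sz f - sz \<kappa>) \<kappa>) = (\<Sum>q\<in>SL. KF (snd q) h')"
    unfolding X_def SL_def by (subst sum.Sigma[OF finKK]) (use finH in \<open>auto simp: split_def\<close>)
  have LHS: "convF (KF f) (KF (row a)) h = (\<Sum>q\<in>SL. KF (snd q) h')"
    using LHS1 L2 L3 unfolding X_def by simp
  have finHf: "finite (HSF f a)" using HSF_finite[OF ff] .
  have partl: "partF l" if "l \<in> HSF f a" for l using il_up_partF[OF _ pf] that unfolding HSF_def by blast
  have finKl: "finite (K l e)" if "l \<in> HSF f a" for l using finK partl[OF that] partF_fs by blast
  define SR where "SR = Sigma (HSF f a) (\<lambda>l. K l e)"
  have "(\<Sum>l\<in>HSF f a. KF l h) = (\<Sum>l\<in>HSF f a. \<Sum>\<rho>\<in>K l e. KF \<rho> h')"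
  proof (rule sum.cong[OF refl])
    fix l assume l: "l \<in> HSF f a"
    show "KF l h = (\<Sum>\<rho>\<in>K l e. KF \<rho> h')"
      using branching[OF partl[OF l] hN] unfolding K_def e_def h'_def .
  qed
  also have "\<dots> = (\<Sum>q\<in>SR. KF (snd q) h')"
    unfolding SR_def by (subst sum.Sigma[OF finHf]) (use finKl in \<open>auto simp: split_def\<close>)
  finally have RHS: "(\<Sum>l\<in>HSF f a. KF l h) = (\<Sum>q\<in>SR. KF (snd q) h')" .
  have finSL: "finite SL" unfolding SL_def using finKK finH by blast
  have finSR: "finite SR" unfolding SR_def using finHf finKl by blast
  have cards: "card {x. (x, \<rho>) \<in> SL} = card {x. (x, \<rho>) \<in> SR}" for \<rho>
  proof (cases "fs \<rho>")
    case False
    have "{x. (x, \<rho>) \<in> SL} = {}"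
      using False il_fs_up il_fs ff unfolding SL_def KK_def HSF_def by blast
    moreover have "{x. (x, \<rho>) \<in> SR} = {}"
      using False il_fs il_fs_up ff unfolding SR_def K_def HSF_def by blast
    ultimately show ?thesis by simp
  next
    case fr: True
    show ?thesis
    proof (cases "sz \<rho> + e = sz f + a")
      case True
      have A: "{x. (x, \<rho>) \<in> SL} = {k \<in> Bx f \<rho>. sz f \<le> sz k + e}"
      proof (intro set_eqI iffI)
        fix k assume "k \<in> {x. (x, \<rho>) \<in> SL}"
        then have k: "il k f" "il k \<rho>" "sz f \<le> sz k + e" unfolding SL_def KK_def HSF_def by auto
        then show "k \<in> {k \<in> Bx f \<rho>. sz f \<le> sz k + e}" using Bx_il by blast
      next
        fix k assume "k \<in> {k \<in> Bx f \<rho>. sz f \<le> sz k + e}"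
        then have k: "il k f" "il k \<rho>" "sz f \<le> sz k + e" using Bx_il by blast+
        have s1: "sz k \<le> sz f" using szk[OF k(1)] .
        have s2: "sz k \<le> sz \<rho>" using il_sz[OF k(2) fr] .
        have "e \<le> a + (sz f - sz k)" using s1 s2 True by arith
        moreover have "sz \<rho> = sz k + (a - (e - (sz f - sz k)))" using s1 s2 True k(3) by arith
        ultimately show "k \<in> {x. (x, \<rho>) \<in> SL}" using k unfolding SL_def KK_def HSF_def by auto
      qed
      have B: "{x. (x, \<rho>) \<in> SR} = {l. il f l \<and> il \<rho> l \<and> sz l = sz f + a}"
        unfolding SR_def K_def HSF_def using True by auto
      show ?thesis unfolding A B by (rule pieri_local[OF ff fr True])
    next
      case False
      have "{x. (x, \<rho>) \<in> SL} = {}"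
      proof (rule ccontr)
        assume "{x. (x, \<rho>) \<in> SL} \<noteq> {}"
        then obtain k where "(k, \<rho>) \<in> SL" by auto
        then have k: "il k f" "sz f \<le> sz k + e" "e \<le> a + (sz f - sz k)"
          "sz \<rho> = sz k + (a - (e - (sz f - sz k)))" unfolding SL_def KK_def HSF_def by auto
        have s1: "sz k \<le> sz f" using szk[OF k(1)] .
        show False using s1 k(2-4) False by arith
      qed
      moreover have "{x. (x, \<rho>) \<in> SR} = {}"
        using False unfolding SR_def K_def HSF_def by auto
      ultimately show ?thesis by simp
    qed
  qed
  show ?case unfolding LHS RHS by (rule sum_snd_card[OF finSL finSR cards])
qed



lemma ssyt_ge_row:
  assumes T: "T \<in> ssytF f" and pf: "partF f"
  shows "(i, j) \<in> cellsF f \<Longrightarrow> i \<le> T (i, j)"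
proof (induction i)
  case 0 then show ?case by simp
next
  case (Suc i)
  have "j < f (Suc i)" using Suc.prems unfolding cellsF_def by auto
  also have "\<dots> \<le> f i" using partF_dec[OF pf] .
  finally have "(i, j) \<in> cellsF f" unfolding cellsF_def by auto
  then have "i \<le> T (i, j)" using Suc.IH by blast
  also have "\<dots> < T (Suc i, j)" using ssyt_col[OF T Suc.prems] .
  finally show ?case by simp
qed

lemma card_cells_rows:
  assumes "fs f"
  shows "card {c \<in> cellsF f. fst c \<le> k} = (\<Sum>i\<le>k. f i)"
proof -
  have "{c \<in> cellsF f. fst c \<le> k} = Sigma {..k} (\<lambda>i. {..<f i})" unfolding cellsF_def by auto
  then show ?thesis by (simp add: card_SigmaI)
qed

lemma card_le_vals:
  assumes "finite C"
  shows "card {c \<in> C. (T c :: nat) \<le> k} = (\<Sum>v\<le>k. card {c \<in> C. T c = v})"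
proof -
  have "{c \<in> C. T c \<le> k} = (\<Union>v\<in>{..k}. {c \<in> C. T c = v})" by auto
  moreover have "card (\<Union>v\<in>{..k}. {c \<in> C. T c = v}) = (\<Sum>v\<le>k. card {c \<in> C. T c = v})"
    by (rule card_UN_disjoint) (use assms in auto)
  ultimately show ?thesis by simp
qed

lemma dominance:
  assumes pf: "partF f" and K: "KF f h \<noteq> 0"
  shows "(\<Sum>i\<le>k. h i) \<le> (\<Sum>i\<le>k. f i)"
proof -
  have ff: "fs f" using pf partF_fs by blast
  obtain T where T: "T \<in> ssytF f" "contF f T h"
    using K unfolding KF_def by (metis (no_types, lifting) card.empty empty_Collect_eq)
  have "(\<Sum>i\<le>k. h i) = (\<Sum>v\<le>k. card {c \<in> cellsF f. T c = v})"
    using T(2) unfolding contF_def by simp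
  also have "\<dots> = card {c \<in> cellsF f. T c \<le> k}"
    using card_le_vals[OF cellsF_finite[OF ff]] by simp
  also have "\<dots> \<le> card {c \<in> cellsF f. fst c \<le> k}"
  proof (rule card_mono)
    show "finite {c \<in> cellsF f. fst c \<le> k}" using cellsF_finite[OF ff] by simp
    show "{c \<in> cellsF f. T c \<le> k} \<subseteq> {c \<in> cellsF f. fst c \<le> k}"
    proof clarify
      fix i j assume "(i, j) \<in> cellsF f" "T (i, j) \<le> k"
      then show "fst (i, j) \<le> k" using ssyt_ge_row[OF T(1) pf] by fastforce
    qed
  qed
  also have "\<dots> = (\<Sum>i\<le>k. f i)" using card_cells_rows[OF ff] .
  finally show ?thesis .
qed

lemma KF_self_pos:
  assumes pf: "partF f"
  shows "KF f f \<noteq> 0"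
proof -
  have ff: "fs f" using pf partF_fs by blast
  define T0 where "T0 = (\<lambda>(i, j). if j < f i then i else (0::nat))"
  have "T0 \<in> ssytF f"
  proof (rule ssytI)
    fix c assume "c \<notin> cellsF f" then show "T0 c = 0" unfolding T0_def cellsF_def by (cases c) auto
  next
    fix i j assume "(i, Suc j) \<in> cellsF f" then show "T0 (i, j) \<le> T0 (i, Suc j)"
      unfolding T0_def cellsF_def by auto
  next
    fix i j assume c: "(Suc i, j) \<in> cellsF f"
    then have "j < f (Suc i)" unfolding cellsF_def by auto
    moreover have "f (Suc i) \<le> f i" using partF_dec[OF pf] .
    ultimately show "T0 (i, j) < T0 (Suc i, j)" unfolding T0_def by auto
  qed
  moreover have "contF f T0 f"
    unfolding contF_def
  proof
    fix k
    have "{c \<in> cellsF f. T0 c = k} = {k} \<times> {..<f k}" unfolding T0_def cellsF_def by auto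
    then show "f k = card {c \<in> cellsF f. T0 c = k}" by (simp add: card_cartesian_product)
  qed
  ultimately have "T0 \<in> {T \<in> ssytF f. contF f T f}" by simp
  moreover have "finite {T \<in> ssytF f. contF f T f}" using ssyt_finite[OF ff ff] .
  ultimately show ?thesis unfolding KF_def by (metis card_0_eq empty_iff)
qed

definition phi :: "nat \<Rightarrow> (nat \<Rightarrow> nat) \<Rightarrow> nat" where
  "phi K g = (\<Sum>k<K. \<Sum>i\<le>k. g i)"

lemma phi_strict:
  assumes z1: "\<forall>i\<ge>K. g1 i = 0" and z2: "\<forall>i\<ge>K. g2 i = 0"
    and dom: "\<And>k. (\<Sum>i\<le>k. g2 i) \<le> (\<Sum>i\<le>k. g1 i)" and ne: "g1 \<noteq> g2"
  shows "phi K g2 < phi K g1"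
proof -
  obtain i0 where "g1 i0 \<noteq> g2 i0" using ne by auto
  define k0 where "k0 = (LEAST i. g1 i \<noteq> g2 i)"
  have k0: "g1 k0 \<noteq> g2 k0" unfolding k0_def by (rule LeastI) (rule \<open>g1 i0 \<noteq> g2 i0\<close>)
  have below: "\<And>i. i < k0 \<Longrightarrow> g1 i = g2 i" unfolding k0_def using not_less_Least by blast
  have k0K: "k0 < K" using k0 z1 z2 by (metis not_le)
  have eqb: "(\<Sum>i<k0. g2 i) = (\<Sum>i<k0. g1 i)" using below by simp
  have "(\<Sum>i\<le>k0. g2 i) = (\<Sum>i<k0. g2 i) + g2 k0" by (simp add: lessThan_Suc_atMost[symmetric])
  moreover have "(\<Sum>i\<le>k0. g1 i) = (\<Sum>i<k0. g1 i) + g1 k0" by (simp add: lessThan_Suc_atMost[symmetric])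
  ultimately have "g2 k0 \<le> g1 k0" using dom[of k0] eqb by simp
  then have "g2 k0 < g1 k0" using k0 by simp
  then have strict: "(\<Sum>i\<le>k0. g2 i) < (\<Sum>i\<le>k0. g1 i)"
    using eqb by (simp add: lessThan_Suc_atMost[symmetric])
  show ?thesis unfolding phi_def
    by (rule sum_strict_mono_ex1) (use dom strict k0K in auto)
qed



definition pt :: "nat list \<Rightarrow> nat \<Rightarrow> nat" where
  "pt la i = (if i < length la then la ! i else 0)"

lemma pt_partF:
  assumes "is_partition la"
  shows "partF (pt la)"
  unfolding partF_def
proof
  have s: "sorted_wrt (\<ge>) la" using assms unfolding is_partition_def by blast
  show "\<forall>i. pt la (Suc i) \<le> pt la i"
  proof
    fix i show "pt la (Suc i) \<le> pt la i"
    proof (cases "Suc i < length la")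
      case True
      then show ?thesis using sorted_wrt_nth_less[OF s, of i "Suc i"] unfolding pt_def by simp
    next
      case False then show ?thesis unfolding pt_def by simp
    qed
  qed
  show "fs (pt la)" unfolding fs_def pt_def by (rule exI[of _ "length la"]) auto
qed

lemma pt_pos:
  assumes "is_partition la"
  shows "0 < pt la i \<longleftrightarrow> i < length la"
  using assms unfolding is_partition_def pt_def by (auto simp: nth_mem)

lemma pt_inj:
  assumes a: "is_partition la" and b: "is_partition lb" and e: "pt la = pt lb"
  shows "la = lb"
proof -
  have "length la = length lb"
  proof (rule ccontr)
    assume ne: "length la \<noteq> length lb"
    show False
    proof (cases "length la < length lb")
      case True
      then have "0 < pt lb (length la)" using pt_pos[OF b] by simp
      moreover have "\<not> 0 < pt la (length la)" using pt_pos[OF a] by simp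
      ultimately show False using e by simp
    next
      case False
      then have "length lb < length la" using ne by simp
      then have "0 < pt la (length lb)" using pt_pos[OF a] by simp
      moreover have "\<not> 0 < pt lb (length lb)" using pt_pos[OF b] by simp
      ultimately show False using e by simp
    qed
  qed
  moreover have "\<And>i. i < length la \<Longrightarrow> la ! i = lb ! i"
    using e calculation unfolding pt_def by (metis)
  ultimately show ?thesis by (rule nth_equalityI)
qed

lemma pt_surj:
  assumes pf: "partF f"
  shows "\<exists>la. is_partition la \<and> pt la = f"
proof -
  obtain L0 where L0: "\<forall>i\<ge>L0. f i = 0" using pf partF_fs fs_bound by blast
  define L where "L = (LEAST i. f i = 0)"
  have fL: "f L = 0" unfolding L_def by (rule LeastI[of _ L0]) (use L0 in auto)
  have below: "i < L \<Longrightarrow> 0 < f i" for i unfolding L_def using not_less_Least by blast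
  have above: "L \<le> i \<Longrightarrow> f i = 0" for i
    using lift_Suc_antimono_le[of f L i] partF_dec[OF pf] fL by auto
  define la where "la = map f [0..<L]"
  have "sorted_wrt (\<ge>) la"
    unfolding sorted_wrt_iff_nth_less la_def
    using lift_Suc_antimono_le[of f] partF_dec[OF pf] by auto
  moreover have "\<forall>x\<in>set la. 0 < x" unfolding la_def using below by auto
  moreover have "pt la = f" unfolding pt_def la_def using above by (auto intro!: ext)
  ultimately show ?thesis unfolding is_partition_def by blast
qed

lemma sum_list_pt: "sum_list la = sz (pt la)"
proof -
  have "sz (pt la) = sum (pt la) {..<length la}" by (rule sz_eq) (auto simp: pt_def)
  also have "\<dots> = (\<Sum>i<length la. la ! i)" unfolding pt_def by simp
  also have "\<dots> = sum_list la" by (simp add: sum_list_sum_nth atLeast0LessThan)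
  finally show ?thesis by simp
qed

lemma cells_pt: "cells la = cellsF (pt la)"
  unfolding cells_def cellsF_def pt_def by (auto split: if_splits)

lemma schur_KF: "schur la m = int (KF (pt la) (Poly_Mapping.lookup m))"
  unfolding schur_def KF_def ssyt_def ssytF_def content_def contF_def cells_pt by simp

lemma first_part_pt: "first_part la = pt la 0"
  unfolding first_part_def pt_def by (cases la) auto

lemma bij_pt: "bij_betw pt {la. is_partition la \<and> Q (pt la)} {g. partF g \<and> Q g}"
  unfolding bij_betw_def
proof
  show "inj_on pt {la. is_partition la \<and> Q (pt la)}" using pt_inj by (auto intro: inj_onI)
  show "pt ` {la. is_partition la \<and> Q (pt la)} = {g. partF g \<and> Q g}"
  proof (intro set_eqI iffI)
    fix g assume "g \<in> pt ` {la. is_partition la \<and> Q (pt la)}"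
    then show "g \<in> {g. partF g \<and> Q g}" using pt_partF by auto
  next
    fix g assume "g \<in> {g. partF g \<and> Q g}"
    then obtain la where "is_partition la" "pt la = g" "Q g" using pt_surj by blast
    then show "g \<in> pt ` {la. is_partition la \<and> Q (pt la)}" by auto
  qed
qed

lemma card_pt: "card {la. is_partition la \<and> Q (pt la)} = card {g. partF g \<and> Q g}"
  using bij_betw_same_card[OF bij_pt] .

lemma sum_pt: "(\<Sum>la\<in>{la. is_partition la \<and> Q (pt la)}. F (pt la)) = (\<Sum>g\<in>{g. partF g \<and> Q g}. F g)"
  using sum.reindex_bij_betw[OF bij_pt] .

lemma finite_pt: "finite {g. partF g \<and> Q g} \<Longrightarrow> finite {la. is_partition la \<and> Q (pt la)}"
  using bij_betw_finite[OF bij_pt] by blast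



lemma lookup_pt: "Poly_Mapping.lookup (Abs_poly_mapping (pt la)) = pt la"
proof (rule lookup_Abs_poly_mapping)
  show "finite {x. pt la x \<noteq> 0}" by (rule finite_subset[of _ "{..<length la}"]) (auto simp: pt_def)
qed

lemma expansion_unique:
  assumes E1: "schur_expansion G c" and E2: "schur_expansion G c'"
  shows "c = c'"
proof (rule ccontr)
  assume ne: "c \<noteq> c'"
  define S where "S = {la. c la \<noteq> 0} \<union> {la. c' la \<noteq> 0}"
  have fin1: "finite {la. c la \<noteq> 0}" and fin2: "finite {la. c' la \<noteq> 0}"
    using E1 E2 unfolding schur_expansion_def by blast+
  have finS: "finite S" unfolding S_def using fin1 fin2 by blast
  have partS: "is_partition la" if "la \<in> S" for la
    using that E1 E2 unfolding S_def schur_expansion_def by blast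
  have G1: "G m = (\<Sum>la\<in>S. c la * schur la m)" for m
  proof -
    have "G m = (\<Sum>la\<in>{la. c la \<noteq> 0}. c la * schur la m)"
      using E1 unfolding schur_expansion_def by simp
    also have "\<dots> = (\<Sum>la\<in>S. c la * schur la m)"
      by (rule sum.mono_neutral_left) (use finS in \<open>auto simp: S_def\<close>)
    finally show ?thesis .
  qed
  have G2: "G m = (\<Sum>la\<in>S. c' la * schur la m)" for m
  proof -
    have "G m = (\<Sum>la\<in>{la. c' la \<noteq> 0}. c' la * schur la m)"
      using E2 unfolding schur_expansion_def by simp
    also have "\<dots> = (\<Sum>la\<in>S. c' la * schur la m)"
      by (rule sum.mono_neutral_left) (use finS in \<open>auto simp: S_def\<close>)
    finally show ?thesis .
  qed
  define D where "D la = c la - c' la" for la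
  have Z: "(\<Sum>la\<in>S. D la * schur la m) = 0" for m
  proof -
    have "(\<Sum>la\<in>S. D la * schur la m) = (\<Sum>la\<in>S. c la * schur la m) - (\<Sum>la\<in>S. c' la * schur la m)"
      unfolding D_def by (simp add: left_diff_distrib sum_subtractf)
    then show ?thesis using G1 G2 by simp
  qed
  define S0 where "S0 = {la \<in> S. D la \<noteq> 0}"
  obtain la1 where "c la1 \<noteq> c' la1" using ne by auto
  then have "la1 \<in> S0" unfolding S0_def S_def D_def by auto
  then have S0ne: "S0 \<noteq> {}" by auto
  have finS0: "finite S0" unfolding S0_def using finS by simp
  have Sne: "S \<noteq> {}" using S0ne unfolding S0_def by auto
  define K where "K = Max (length ` S)"
  have zK: "\<forall>i\<ge>K. pt la i = 0" if "la \<in> S" for la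
  proof -
    have "length la \<le> K" unfolding K_def using finS that by simp
    then show ?thesis unfolding pt_def by auto
  qed
  define v where "v = Max ((\<lambda>la. phi K (pt la)) ` S0)"
  have "v \<in> (\<lambda>la. phi K (pt la)) ` S0" unfolding v_def using finS0 S0ne by simp
  then obtain la0 where la0: "la0 \<in> S0" "phi K (pt la0) = v" by auto
  have vmax: "phi K (pt la) \<le> v" if "la \<in> S0" for la unfolding v_def using finS0 that by simp
  have la0S: "la0 \<in> S" and Dla0: "D la0 \<noteq> 0" using la0(1) unfolding S0_def by auto
  define m0 where "m0 = Abs_poly_mapping (pt la0)"
  have lm0: "Poly_Mapping.lookup m0 = pt la0" unfolding m0_def by (rule lookup_pt)
  have other: "D la * schur la m0 = 0" if la: "la \<in> S - {la0}" for la
  proof (cases "D la = 0")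
    case True then show ?thesis by simp
  next
    case False
    then have laS0: "la \<in> S0" using la unfolding S0_def by auto
    have "schur la m0 = 0"
    proof (rule ccontr)
      assume "schur la m0 \<noteq> 0"
      then have "KF (pt la) (pt la0) \<noteq> 0" unfolding schur_KF lm0 by simp
      then have dom: "\<And>k. (\<Sum>i\<le>k. pt la0 i) \<le> (\<Sum>i\<le>k. pt la i)"
        using dominance pt_partF partS la by blast
      have "pt la \<noteq> pt la0" using pt_inj partS la la0S by blast
      then have "phi K (pt la0) < phi K (pt la)"
        using phi_strict[OF zK[of la] zK[OF la0S] dom] la by blast
      then show False using vmax[OF laS0] la0(2) by simp
    qed
    then show ?thesis by simp
  qed
  have "(\<Sum>la\<in>S. D la * schur la m0) = D la0 * schur la0 m0 + (\<Sum>la\<in>S - {la0}. D la * schur la m0)"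
    by (rule sum.remove[OF finS la0S])
  also have "(\<Sum>la\<in>S - {la0}. D la * schur la m0) = 0" using other by (intro sum.neutral) blast
  finally have "D la0 * schur la0 m0 = 0" using Z by simp
  moreover have "schur la0 m0 \<noteq> 0"
    unfolding schur_KF lm0 using KF_self_pos[OF pt_partF[OF partS[OF la0S]]] by simp
  ultimately show False using Dla0 by simp
qed

lemma first_row_part_eq:
  assumes "schur_expansion G c"
  shows "first_row_part p G = (\<lambda>m. \<Sum>la\<in>{la. c la \<noteq> 0 \<and> first_part la = p}. c la * schur la m)"
proof -
  have "(THE c. schur_expansion G c) = c"
    by (rule the_equality) (use assms expansion_unique in blast)+
  then show ?thesis unfolding first_row_part_def by simp
qed



lemma fs_lookup: "fs (Poly_Mapping.lookup m)"
proof -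
  have fin: "finite {k. Poly_Mapping.lookup m k \<noteq> 0}" by simp
  obtain L where L0: "\<forall>i\<in>{k. Poly_Mapping.lookup m k \<noteq> 0}. i < L"
    using fin finite_nat_set_iff_bounded by blast
  then have L: "{k. Poly_Mapping.lookup m k \<noteq> 0} \<subseteq> {..<L}" by auto
  have "\<forall>i\<ge>L. Poly_Mapping.lookup m i = 0"
  proof (intro allI impI)
    fix i assume "L \<le> i"
    then have "i \<notin> {..<L}" by simp
    then show "Poly_Mapping.lookup m i = 0" using L by blast
  qed
  then show ?thesis unfolding fs_def by blast
qed

lemma sf_mult_conv:
  "sf_mult (\<lambda>m. int (F (Poly_Mapping.lookup m))) (\<lambda>m. int (G (Poly_Mapping.lookup m))) m
     = int (convF F G (Poly_Mapping.lookup m))"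
proof -
  have "sf_mult (\<lambda>m. int (F (Poly_Mapping.lookup m))) (\<lambda>m. int (G (Poly_Mapping.lookup m))) m
      = (\<Sum>q\<in>{(m1, m2). m1 + m2 = m}. int (F (Poly_Mapping.lookup (fst q))) * int (G (Poly_Mapping.lookup (snd q))))"
    unfolding sf_mult_def by (simp add: split_def)
  also have "\<dots> = (\<Sum>p\<in>pairs (Poly_Mapping.lookup m). int (F (fst p) * G (snd p)))"
  proof (rule sum.reindex_bij_witness[where j="\<lambda>q. (Poly_Mapping.lookup (fst q), Poly_Mapping.lookup (snd q))"
        and i="\<lambda>p. (Abs_poly_mapping (fst p), Abs_poly_mapping (snd p))"])
    fix q assume "q \<in> {(m1, m2). m1 + m2 = m}"
    then show "(Abs_poly_mapping (fst (Poly_Mapping.lookup (fst q), Poly_Mapping.lookup (snd q))),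
           Abs_poly_mapping (snd (Poly_Mapping.lookup (fst q), Poly_Mapping.lookup (snd q)))) = q"
      by (cases q) simp
  next
    fix q assume "q \<in> {(m1, m2). m1 + m2 = m}"
    then show "(Poly_Mapping.lookup (fst q), Poly_Mapping.lookup (snd q)) \<in> pairs (Poly_Mapping.lookup m)"
      unfolding pairs_def by (cases q) (auto simp: lookup_add)
  next
    fix p assume p: "p \<in> pairs (Poly_Mapping.lookup m)"
    obtain g1 g2 where pp: "p = (g1, g2)" "\<forall>k. g1 k + g2 k = Poly_Mapping.lookup m k"
      using p unfolding pairs_def by (cases p) auto
    have f1: "finite {x. g1 x \<noteq> 0}"
    proof (rule finite_subset[OF _ finite_lookup[of m]])
      show "{x. g1 x \<noteq> 0} \<subseteq> {k. Poly_Mapping.lookup m k \<noteq> 0}"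
      proof
        fix x assume "x \<in> {x. g1 x \<noteq> 0}"
        moreover have "g1 x + g2 x = Poly_Mapping.lookup m x" using pp(2) by blast
        ultimately show "x \<in> {k. Poly_Mapping.lookup m k \<noteq> 0}" by auto
      qed
    qed
    have f2: "finite {x. g2 x \<noteq> 0}"
    proof (rule finite_subset[OF _ finite_lookup[of m]])
      show "{x. g2 x \<noteq> 0} \<subseteq> {k. Poly_Mapping.lookup m k \<noteq> 0}"
      proof
        fix x assume "x \<in> {x. g2 x \<noteq> 0}"
        moreover have "g1 x + g2 x = Poly_Mapping.lookup m x" using pp(2) by blast
        ultimately show "x \<in> {k. Poly_Mapping.lookup m k \<noteq> 0}" by auto
      qed
    qed
    show "(Poly_Mapping.lookup (fst (Abs_poly_mapping (fst p), Abs_poly_mapping (snd p))),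
          Poly_Mapping.lookup (snd (Abs_poly_mapping (fst p), Abs_poly_mapping (snd p)))) = p"
      using f1 f2 pp(1) by simp
    have "Abs_poly_mapping g1 + Abs_poly_mapping g2 = m"
      by (rule poly_mapping_eqI) (use f1 f2 pp(2) in \<open>simp add: lookup_add\<close>)
    then show "(Abs_poly_mapping (fst p), Abs_poly_mapping (snd p)) \<in> {(m1, m2). m1 + m2 = m}"
      using pp(1) by simp
  next
    fix q assume "q \<in> {(m1, m2). m1 + m2 = m}"
    show "int (F (fst (Poly_Mapping.lookup (fst q), Poly_Mapping.lookup (snd q))) *
               G (snd (Poly_Mapping.lookup (fst q), Poly_Mapping.lookup (snd q)))) =
          int (F (Poly_Mapping.lookup (fst q))) * int (G (Poly_Mapping.lookup (snd q)))" by simp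
  qed
  also have "\<dots> = int (convF F G (Poly_Mapping.lookup m))"
    unfolding convF_def by (simp add: split_def)
  finally show ?thesis .
qed

lemma pieri:
  assumes "partF f" "fs h"
  shows "convF (KF f) (KF (row a)) h = (\<Sum>l\<in>HSF f a. KF l h)"
  using pieri_N[OF _ assms(1)] assms(2) unfolding fs_def by blast

lemma hsf_row: "hsf (int a) = (\<lambda>m. int (KF (row a) (Poly_Mapping.lookup m)))"
proof (cases "a = 0")
  case True
  have "pt [] = row 0" unfolding pt_def row_def by auto
  then show ?thesis using True unfolding hsf_def by (intro ext) (simp add: schur_KF)
next
  case False
  have "pt [a] = row a" unfolding pt_def row_def by auto
  then show ?thesis using False unfolding hsf_def by (intro ext) (simp add: schur_KF)
qed

definition HL :: "nat list \<Rightarrow> nat \<Rightarrow> nat list set" where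
  "HL mu a = {la. is_partition la \<and> pt la \<in> HSF (pt mu) a}"

lemma HSF_partF: "partF f \<Longrightarrow> l \<in> HSF f a \<Longrightarrow> partF l"
  unfolding HSF_def using il_up_partF by blast

lemma HSF_coll: "partF f \<Longrightarrow> {g. partF g \<and> g \<in> HSF f a} = HSF f a"
  using HSF_partF by blast

lemma HL_finite: "is_partition mu \<Longrightarrow> finite (HL mu a)"
  unfolding HL_def using finite_pt[of "\<lambda>g. g \<in> HSF (pt mu) a"] HSF_coll HSF_finite pt_partF partF_fs
  by metis

lemma pieri_list:
  assumes mu: "is_partition mu"
  shows "sf_mult (schur mu) (hsf (int a)) = (\<lambda>m. \<Sum>la\<in>HL mu a. schur la m)"
proof
  fix m
  have pm: "partF (pt mu)" using pt_partF[OF mu] .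
  have "sf_mult (schur mu) (hsf (int a)) m = int (convF (KF (pt mu)) (KF (row a)) (Poly_Mapping.lookup m))"
    unfolding hsf_row using sf_mult_conv[of "KF (pt mu)" "KF (row a)" m] by (simp add: schur_KF[abs_def])
  also have "\<dots> = int (\<Sum>l\<in>HSF (pt mu) a. KF l (Poly_Mapping.lookup m))"
    using pieri[OF pm fs_lookup] by simp
  also have "\<dots> = (\<Sum>l\<in>HSF (pt mu) a. int (KF l (Poly_Mapping.lookup m)))" by simp
  also have "\<dots> = (\<Sum>l\<in>{g. partF g \<and> g \<in> HSF (pt mu) a}. int (KF l (Poly_Mapping.lookup m)))"
    using HSF_coll[OF pm] by simp
  also have "\<dots> = (\<Sum>la\<in>HL mu a. int (KF (pt la) (Poly_Mapping.lookup m)))"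
    unfolding HL_def by (rule sum_pt[symmetric])
  also have "\<dots> = (\<Sum>la\<in>HL mu a. schur la m)" by (simp add: schur_KF)
  finally show "sf_mult (schur mu) (hsf (int a)) m = (\<Sum>la\<in>HL mu a. schur la m)" .
qed

definition HLi :: "nat list \<Rightarrow> int \<Rightarrow> nat list set" where
  "HLi mu k = (if k < 0 then {} else HL mu (nat k))"

lemma FR:
  assumes mu: "is_partition mu"
  shows "first_row_part p (sf_mult (schur mu) (hsf k)) = (\<lambda>m. \<Sum>la\<in>{la \<in> HLi mu k. first_part la = p}. schur la m)"
proof (cases "k < 0")
  case True
  have z: "sf_mult (schur mu) (hsf k) = (\<lambda>m. 0)"
    using True unfolding hsf_def sf_zero_def sf_mult_def by simp
  have "schur_expansion (sf_mult (schur mu) (hsf k)) (\<lambda>_. 0)"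
    unfolding schur_expansion_def z by simp
  from first_row_part_eq[OF this, of p] show ?thesis using True unfolding HLi_def by simp
next
  case False
  then obtain a where a: "k = int a" by (metis nonneg_int_cases not_less)
  define c where "c la = (if la \<in> HL mu a then 1 else (0::int))" for la
  have cset: "{la. c la \<noteq> 0} = HL mu a" unfolding c_def by auto
  have "schur_expansion (sf_mult (schur mu) (hsf k)) c"
    unfolding schur_expansion_def cset a pieri_list[OF mu]
  proof (intro conjI)
    show "finite (HL mu a)" using HL_finite[OF mu] .
    show "\<forall>la. c la \<noteq> 0 \<longrightarrow> is_partition la" unfolding c_def HL_def by auto
    show "(\<lambda>m. \<Sum>la\<in>HL mu a. schur la m) = (\<lambda>m. \<Sum>la\<in>HL mu a. c la * schur la m)"
      unfolding c_def by simp
  qed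
  from first_row_part_eq[OF this, of p]
  have "first_row_part p (sf_mult (schur mu) (hsf k)) =
     (\<lambda>m. \<Sum>la\<in>{la. c la \<noteq> 0 \<and> first_part la = p}. c la * schur la m)" .
  also have "\<dots> = (\<lambda>m. \<Sum>la\<in>{la \<in> HLi mu k. first_part la = p}. schur la m)"
  proof -
    have "{la. c la \<noteq> 0 \<and> first_part la = p} = {la \<in> HLi mu k. first_part la = p}"
      unfolding HLi_def c_def a by auto
    moreover have "c la * schur la m = schur la m" if "la \<in> {la \<in> HLi mu k. first_part la = p}" for la m
      using that unfolding c_def HLi_def a by simp
    ultimately show ?thesis by (intro ext) (metis (no_types, lifting) sum.cong)
  qed
  finally show ?thesis .
qed



lemma sz_mono: "(\<And>i. k i \<le> f i) \<Longrightarrow> fs f \<Longrightarrow> sz k \<le> sz f"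
proof -
  assume a: "\<And>i. k i \<le> f i" "fs f"
  obtain L where L: "\<forall>i\<ge>L. f i = 0" using a(2) fs_bound by blast
  have Lk: "\<forall>i\<ge>L. k i = 0" using L a(1) by (metis le_zero_eq)
  show ?thesis unfolding sz_eq[OF L] sz_eq[OF Lk] by (rule sum_mono) (rule a(1))
qed

lemma hs_bound: "il g V \<Longrightarrow> fs g \<Longrightarrow> sz V \<le> sz g + V 0"
proof -
  assume a: "il g V" "fs g"
  have "sz V = V 0 + sz (\<lambda>i. V (Suc i))" using sz_shift il_fs_up[OF a] by blast
  moreover have "sz (\<lambda>i. V (Suc i)) \<le> sz g" by (rule sz_mono) (use il_ge[OF a(1)] a(2) in auto)
  ultimately show ?thesis by simp
qed

lemma comb_main:
  fixes d a b p p' :: nat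
  assumes pL: "partF L" and pV: "partF V"
  defines "M \<equiv> max p p'"
  shows "card {g. partF g \<and> (sz g = d \<and> il g L \<and> sz L = sz g + a \<and> L 0 = p \<and> il g V \<and> sz V = sz g + b \<and> V 0 = p')}
   = card {g. partF g \<and> (int (sz g) = int d + int a + int b - int M \<and> \<not> (int M - int b < 0) \<and> il g L \<and>
       sz L = sz g + nat (int M - int b) \<and> L 0 = p \<and> \<not> (int M - int a < 0) \<and> il g V \<and>
       sz V = sz g + nat (int M - int a) \<and> V 0 = p')}"
    (is "card ?A = card ?B")
proof -
  have fL: "fs L" and fV: "fs V" using pL pV partF_fs by blast+
  show ?thesis
  proof (cases "L 0 = p \<and> V 0 = p' \<and> a \<le> M \<and> b \<le> M \<and> sz L = d + a \<and> sz V = d + b")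
    case False
    have X: "?A = {}"
    proof (rule ccontr)
      assume "?A \<noteq> {}"
      then obtain g where g: "partF g" "sz g = d" "il g L" "sz L = sz g + a" "L 0 = p" "il g V" "sz V = sz g + b" "V 0 = p'"
        by blast
      have "sz L \<le> sz g + L 0" using hs_bound[OF g(3)] g(1) partF_fs by blast
      moreover have "sz V \<le> sz g + V 0" using hs_bound[OF g(6)] g(1) partF_fs by blast
      ultimately show False using False g unfolding M_def by auto
    qed
    have Y: "?B = {}"
    proof (rule ccontr)
      assume "?B \<noteq> {}"
      then obtain g where g: "partF g" "int (sz g) = int d + int a + int b - int M" "\<not> (int M - int b < 0)" "il g L"
        "sz L = sz g + nat (int M - int b)" "L 0 = p" "\<not> (int M - int a < 0)" "il g V"
        "sz V = sz g + nat (int M - int a)" "V 0 = p'" by blast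
      show False using False g by auto
    qed
    show ?thesis by (simp only: X Y)
  next
    case True
    then have T: "L 0 = p" "V 0 = p'" "a \<le> M" "b \<le> M" "sz L = d + a" "sz V = d + b" by auto
    have MM: "M = max (L 0) (V 0)" using T unfolding M_def by simp
    have A: "?A = {g \<in> Bx L V. sz g = d}"
      using T Bx_il il_partF pL by fastforce
    have B: "?B = {g \<in> Bx L V. int (sz g) = int d + int a + int b - int M}"
    proof (intro set_eqI iffI)
      fix g assume "g \<in> ?B" then show "g \<in> {g \<in> Bx L V. int (sz g) = int d + int a + int b - int M}"
        using Bx_il by blast
    next
      fix g assume g: "g \<in> {g \<in> Bx L V. int (sz g) = int d + int a + int b - int M}"
      then have "il g L" "il g V" using Bx_il by blast+
      moreover have "partF g" using il_partF calculation(1) pL by blast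
      ultimately show "g \<in> ?B" using g T by auto
    qed
    show ?thesis
    proof (cases "M \<le> d + a + b")
      case True
      have "card {g \<in> Bx L V. sz g = d} = card {g \<in> Bx L V. sz g = d + a + b - M}"
        by (rule Bx_card_sym[OF fL fV]) (use T MM True in auto)
      moreover have "{g \<in> Bx L V. int (sz g) = int d + int a + int b - int M} = {g \<in> Bx L V. sz g = d + a + b - M}"
        using True by auto
      ultimately show ?thesis by (simp only: A B)
    next
      case False
      have X: "{g \<in> Bx L V. sz g = d} = {}"
      proof (rule ccontr)
        assume "{g \<in> Bx L V. sz g = d} \<noteq> {}"
        then obtain g where g: "g \<in> Bx L V" "sz g = d" by blast
        have "sz (rfl L V g) + sz g + max (L 0) (V 0) = sz L + sz V" using rfl_sz[OF fL fV g(1)] .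
        then show False using g(2) T MM False by simp
      qed
      have Y: "{g \<in> Bx L V. int (sz g) = int d + int a + int b - int M} = {}"
        using False by auto
      show ?thesis by (simp only: A B X Y)
    qed
  qed
qed



lemma sum_snd_card_gen:
  fixes A B :: "('a \<times> 'b) set" and g :: "'b \<Rightarrow> 'c::comm_semiring_1"
  assumes fA: "finite A" and fB: "finite B"
    and c: "\<And>y. card {x. (x, y) \<in> A} = card {x. (x, y) \<in> B}"
  shows "(\<Sum>p\<in>A. g (snd p)) = (\<Sum>p\<in>B. g (snd p))"
proof -
  have key: "(\<Sum>p\<in>S. g (snd p)) = (\<Sum>y\<in>snd ` A \<union> snd ` B. of_nat (card {x. (x, y) \<in> S}) * g y)"
    if fS: "finite S" and sub: "snd ` S \<subseteq> snd ` A \<union> snd ` B" for S :: "('a \<times> 'b) set"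
  proof -
    have "(\<Sum>p\<in>S. g (snd p)) = (\<Sum>y\<in>snd ` A \<union> snd ` B. \<Sum>p\<in>{p \<in> S. snd p = y}. g (snd p))"
      by (rule sum.group[symmetric]) (use fS fA fB sub in auto)
    also have "\<dots> = (\<Sum>y\<in>snd ` A \<union> snd ` B. of_nat (card {x. (x, y) \<in> S}) * g y)"
    proof (rule sum.cong[OF refl])
      fix y
      have "(\<Sum>p\<in>{p \<in> S. snd p = y}. g (snd p)) = of_nat (card {p \<in> S. snd p = y}) * g y" by simp
      moreover have "card {p \<in> S. snd p = y} = card {x. (x, y) \<in> S}"
      proof (rule bij_betw_same_card[of fst])
        show "bij_betw fst {p \<in> S. snd p = y} {x. (x, y) \<in> S}"
          by (rule bij_betw_byWitness[where f'="\<lambda>x. (x, y)"]) auto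
      qed
      ultimately show "(\<Sum>p\<in>{p \<in> S. snd p = y}. g (snd p)) = of_nat (card {x. (x, y) \<in> S}) * g y" by simp
    qed
    finally show ?thesis .
  qed
  show ?thesis using key[OF fA] key[OF fB] c by simp
qed

lemma length_le_sum_list: "\<forall>x\<in>set xs. (0::nat) < x \<Longrightarrow> length xs \<le> sum_list xs"
  by (induction xs) auto

lemma partitions_of_finite: "finite (partitions_of n)"
proof -
  have "partitions_of n \<subseteq> {xs. set xs \<subseteq> {..nat n} \<and> length xs \<le> nat n}"
  proof
    fix la assume "la \<in> partitions_of n"
    then have p: "is_partition la" "int (sum_list la) = n" unfolding partitions_of_def by auto
    have "length la \<le> sum_list la" using p(1) length_le_sum_list unfolding is_partition_def by blast
    moreover have "set la \<subseteq> {..sum_list la}" using member_le_sum_list by fastforce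
    ultimately show "la \<in> {xs. set xs \<subseteq> {..nat n} \<and> length xs \<le> nat n}" using p(2) by auto
  qed
  moreover have "finite {xs. set xs \<subseteq> {..nat n} \<and> length xs \<le> nat n}"
    by (rule finite_lists_length_le) simp
  ultimately show ?thesis by (rule finite_subset)
qed

definition AA :: "nat \<Rightarrow> int \<Rightarrow> nat list \<Rightarrow> nat list set" where
  "AA p k mu = {la \<in> HLi mu k. first_part la = p}"

lemma AA_finite: "is_partition mu \<Longrightarrow> finite (AA p k mu)"
  unfolding AA_def HLi_def using HL_finite by auto

lemma tensor_expand:
  assumes fP: "finite PP" and pP: "\<And>mu. mu \<in> PP \<Longrightarrow> is_partition mu"
  shows "(\<Sum>mu\<in>PP. sf_tensor (first_row_part p (sf_mult (schur mu) (hsf k1)))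
                      (first_row_part p' (sf_mult (schur mu) (hsf k2))) z)
    = (\<Sum>q\<in>Sigma PP (\<lambda>mu. AA p k1 mu \<times> AA p' k2 mu). schur (fst (snd q)) (fst z) * schur (snd (snd q)) (snd z))"
proof -
  have "(\<Sum>mu\<in>PP. sf_tensor (first_row_part p (sf_mult (schur mu) (hsf k1)))
                      (first_row_part p' (sf_mult (schur mu) (hsf k2))) z)
     = (\<Sum>mu\<in>PP. \<Sum>y\<in>AA p k1 mu \<times> AA p' k2 mu. schur (fst y) (fst z) * schur (snd y) (snd z))"
  proof (rule sum.cong[OF refl])
    fix mu assume mu: "mu \<in> PP"
    have "sf_tensor (first_row_part p (sf_mult (schur mu) (hsf k1)))
                      (first_row_part p' (sf_mult (schur mu) (hsf k2))) z
       = (\<Sum>la\<in>AA p k1 mu. schur la (fst z)) * (\<Sum>nu\<in>AA p' k2 mu. schur nu (snd z))"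
      unfolding sf_tensor_def FR[OF pP[OF mu]] AA_def by (simp add: split_def)
    also have "\<dots> = (\<Sum>la\<in>AA p k1 mu. \<Sum>nu\<in>AA p' k2 mu. schur la (fst z) * schur nu (snd z))"
      by (rule sum_product)
    also have "\<dots> = (\<Sum>y\<in>AA p k1 mu \<times> AA p' k2 mu. schur (fst y) (fst z) * schur (snd y) (snd z))"
      by (simp add: sum.cartesian_product split_def)
    finally show "sf_tensor (first_row_part p (sf_mult (schur mu) (hsf k1)))
                      (first_row_part p' (sf_mult (schur mu) (hsf k2))) z
       = (\<Sum>y\<in>AA p k1 mu \<times> AA p' k2 mu. schur (fst y) (fst z) * schur (snd y) (snd z))" .
  qed
  also have "\<dots> = (\<Sum>q\<in>Sigma PP (\<lambda>mu. AA p k1 mu \<times> AA p' k2 mu). schur (fst (snd q)) (fst z) * schur (snd (snd q)) (snd z))"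
    by (subst sum.Sigma[OF fP]) (use AA_finite pP in \<open>auto simp: split_def\<close>)
  finally show ?thesis .
qed



theorem mainTheorem3:
  fixes d a b p p' :: nat
  defines "M \<equiv> max p p'"
  shows "(\<lambda>z. \<Sum>\<mu>\<in>partitions_of (int d).
            sf_tensor (first_row_part p (sf_mult (schur \<mu>) (hsf (int a))))
                      (first_row_part p' (sf_mult (schur \<mu>) (hsf (int b)))) z)
       = (\<lambda>z. \<Sum>\<mu>\<in>partitions_of (int d + int a + int b - int M).
            sf_tensor (first_row_part p (sf_mult (schur \<mu>) (hsf (int M - int b))))
                      (first_row_part p' (sf_mult (schur \<mu>) (hsf (int M - int a)))) z)"
proof (rule ext)
  fix z
  define PL where "PL = partitions_of (int d)"
  define PR where "PR = partitions_of (int d + int a + int b - int M)"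
  define TL where "TL = Sigma PL (\<lambda>mu. AA p (int a) mu \<times> AA p' (int b) mu)"
  define TR where "TR = Sigma PR (\<lambda>mu. AA p (int M - int b) mu \<times> AA p' (int M - int a) mu)"
  define F where "F y = schur (fst y) (fst z) * schur (snd y) (snd z)" for y
  have pPL: "\<And>mu. mu \<in> PL \<Longrightarrow> is_partition mu" unfolding PL_def partitions_of_def by auto
  have pPR: "\<And>mu. mu \<in> PR \<Longrightarrow> is_partition mu" unfolding PR_def partitions_of_def by auto
  have fPL: "finite PL" unfolding PL_def by (rule partitions_of_finite)
  have fPR: "finite PR" unfolding PR_def by (rule partitions_of_finite)
  have LHS: "(\<Sum>\<mu>\<in>partitions_of (int d).
            sf_tensor (first_row_part p (sf_mult (schur \<mu>) (hsf (int a))))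
                      (first_row_part p' (sf_mult (schur \<mu>) (hsf (int b)))) z) = (\<Sum>q\<in>TL. F (snd q))"
    unfolding PL_def[symmetric] TL_def F_def by (rule tensor_expand[OF fPL pPL])
  have RHS: "(\<Sum>\<mu>\<in>partitions_of (int d + int a + int b - int M).
            sf_tensor (first_row_part p (sf_mult (schur \<mu>) (hsf (int M - int b))))
                      (first_row_part p' (sf_mult (schur \<mu>) (hsf (int M - int a)))) z) = (\<Sum>q\<in>TR. F (snd q))"
    unfolding PR_def[symmetric] TR_def F_def by (rule tensor_expand[OF fPR pPR])
  have fTL: "finite TL" unfolding TL_def using fPL AA_finite pPL by auto
  have fTR: "finite TR" unfolding TR_def using fPR AA_finite pPR by auto
  have cards: "card {x. (x, y) \<in> TL} = card {x. (x, y) \<in> TR}" for y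
  proof -
    obtain la nu where y: "y = (la, nu)" by (cases y)
    show ?thesis
    proof (cases "is_partition la \<and> is_partition nu")
      case False
      have X: "{x. (x, y) \<in> TL} = {}" using False unfolding y TL_def AA_def HLi_def HL_def by auto
      have Y: "{x. (x, y) \<in> TR} = {}" using False unfolding y TR_def AA_def HLi_def HL_def by auto
      show ?thesis by (simp only: X Y)
    next
      case True
      have eL: "{x. (x, y) \<in> TL} = {mu. is_partition mu \<and> (sz (pt mu) = d \<and> il (pt mu) (pt la) \<and> sz (pt la) = sz (pt mu) + a \<and> pt la 0 = p \<and> il (pt mu) (pt nu) \<and> sz (pt nu) = sz (pt mu) + b \<and> pt nu 0 = p')}"
        using True unfolding y TL_def PL_def AA_def HLi_def HL_def HSF_def partitions_of_def first_part_pt sum_list_pt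
        by auto
      have eR: "{x. (x, y) \<in> TR} = {mu. is_partition mu \<and> (int (sz (pt mu)) = int d + int a + int b - int (max p p') \<and> \<not> (int (max p p') - int b < 0) \<and> il (pt mu) (pt la) \<and>
       sz (pt la) = sz (pt mu) + nat (int (max p p') - int b) \<and> pt la 0 = p \<and> \<not> (int (max p p') - int a < 0) \<and> il (pt mu) (pt nu) \<and>
       sz (pt nu) = sz (pt mu) + nat (int (max p p') - int a) \<and> pt nu 0 = p')}"
        using True unfolding y TR_def PR_def AA_def HLi_def HL_def HSF_def partitions_of_def first_part_pt sum_list_pt M_def
        by auto
      have c1: "card {x. (x, y) \<in> TL} = card {g. partF g \<and> (sz g = d \<and> il g (pt la) \<and> sz (pt la) = sz g + a \<and> pt la 0 = p \<and> il g (pt nu) \<and> sz (pt nu) = sz g + b \<and> pt nu 0 = p')}"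
        unfolding eL by (rule card_pt)
      have c2: "card {x. (x, y) \<in> TR} = card {g. partF g \<and> (int (sz g) = int d + int a + int b - int (max p p') \<and> \<not> (int (max p p') - int b < 0) \<and> il g (pt la) \<and>
       sz (pt la) = sz g + nat (int (max p p') - int b) \<and> pt la 0 = p \<and> \<not> (int (max p p') - int a < 0) \<and> il g (pt nu) \<and>
       sz (pt nu) = sz g + nat (int (max p p') - int a) \<and> pt nu 0 = p')}"
        unfolding eR by (rule card_pt)
      show ?thesis unfolding c1 c2
        by (rule comb_main) (use True pt_partF in auto)
    qed
  qed
  show "(\<Sum>\<mu>\<in>partitions_of (int d).
            sf_tensor (first_row_part p (sf_mult (schur \<mu>) (hsf (int a))))
                      (first_row_part p' (sf_mult (schur \<mu>) (hsf (int b)))) z)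
       = (\<Sum>\<mu>\<in>partitions_of (int d + int a + int b - int M).
            sf_tensor (first_row_part p (sf_mult (schur \<mu>) (hsf (int M - int b))))
                      (first_row_part p' (sf_mult (schur \<mu>) (hsf (int M - int a)))) z)"
    unfolding LHS RHS by (rule sum_snd_card_gen[OF fTL fTR cards])
qed

end
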